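(* Let $V$ be a locally convex space, $\Omega\subset V$ open, $I=[\alpha,\beta]\subset\mathbb R$, and let $g$ be a Riemannian metric on $\Omega$ that admits a Levi–Civita connection. (a) A curve $x\in C^2(I,\Omega)$ is energy critical if and only if it is a geodesic. (b) Suppose there is a family $L$ of continuous linear forms on $V$ such that $\bigcap\{\ker l\colon l\in L\}=(0)$, and for every $l\in L$ and $v\in\Omega$ there is an $\eta\in V$ with $l=g(v,\eta,\cdot)$. Then every energy critical $x\in C^1(I,\Omega)$ is $C^2$, and hence is a geodesic.
   Context: All locally convex spaces are real, Hausdorff and sequentially complete. $f$ is $C^1$ if directional derivatives $df(v,\xi)=\lim_{t\to0}(f(v+t\xi)-f(v))/t$ exist and $df$ is continuous; $C^k$ inductively; for a subset $S$, $C^k(S,W)$ means maps extending to $C^k$ maps on an open neighborhood of $S$. A Riemannian metric on $\Omega$ is a map $g\colon\Omega\times V\times V\to\mathbb R$ with each $g(v,\cdot,\cdot)$ positive definite symmetric bilinear. For a $C^1$ metric $g$, a Levi–Civita connection is $D_\xi\varphi(v)=d\varphi(v,\xi)+A(v,\xi)\varphi(v)$ with $A(v,\xi)$ a continuous linear map $V\to V$, linear in $\xi$, $(v,\xi,w)\mapsto A(v,\xi)w$ continuous, $A(v,\xi)\eta=A(v,\eta)\xi$, and $\xi g(\cdot,\varphi,\psi)=g(\cdot,D_\xi\varphi,\psi)+g(\cdot,\varphi,D_\xi\psi)$ for all $\xi\in V$, $\varphi,\psi\in C^1(\Omega,V)$. A geodesic is a $C^2$ curve $x$ with $\ddot x+A(x,\dot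 x)\dot x=0$. The energy of $x\in C^1(I,\Omega)$ is $E(x)=\frac12\int_\alpha^\beta g\big(x(t),\dot x(t),\dot x(t)\big)dt$; $E$ is a $C^1$ function on the open subset $C^1(I,\Omega)$ of the locally convex space $C^1(I,V)$ (topologized by the seminorms $\sup_I p(u)$, $\sup_I p(\dot u)$ for continuous seminorms $p$ on $V$). For $a,b\in\Omega$, $C^1_{ab}(I,\Omega)=\{x\in C^1(I,\Omega)\colon x(\alpha)=a,\ x(\beta)=b\}$. A curve $x\in C^1(I,\Omega)$ is energy critical if it is a critical point of $E$ restricted to $C^1_{x(\alpha)x(\beta)}(I,\Omega)$, i.e. $dE(x,y)=0$ for all $y\in C^1(I,V)$ with $y(\alpha)=y(\beta)=0$. *)

theory Defs
  imports "HOL-Analysis.Analysis"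
begin

text \<open>Locally convex spaces: the type 'v carries a real vector space structure and a
Hausdorff topology (class t2_space); the predicate below requires continuity of the
vector operations, local convexity and sequential completeness.\<close>

definition lcs :: "'v::{real_vector,t2_space} itself \<Rightarrow> bool" where
  "lcs (_::'v itself) \<longleftrightarrow>
     continuous_on UNIV (\<lambda>(x::'v, y::'v). x + y) \<and>
     continuous_on UNIV (\<lambda>(a::real, x::'v). a *\<^sub>R x) \<and>
     (\<forall>U::'v set. open U \<and> 0 \<in> U \<longrightarrow> (\<exists>C. open C \<and> convex C \<and> 0 \<in> C \<and> C \<subseteq> U)) \<and>
     (\<forall>X::nat \<Rightarrow> 'v.
        (\<forall>U. open U \<and> 0 \<in> U \<longrightarrow> (\<exists>N. \<forall>m\<ge>N. \<forall>n\<ge>N. X m - X n \<in> U))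
        \<longrightarrow> (\<exists>l. X \<longlonglongrightarrow> l))"

definition has_dirderiv ::
  "('a::real_vector \<Rightarrow> 'b::{real_vector,topological_space}) \<Rightarrow> 'a \<Rightarrow> 'a \<Rightarrow> 'b \<Rightarrow> bool" where
  "has_dirderiv f v \<xi> d \<longleftrightarrow>
     ((\<lambda>t::real. (1 / t) *\<^sub>R (f (v + t *\<^sub>R \<xi>) - f v)) \<longlongrightarrow> d) (at 0)"

definition dd ::
  "('a::real_vector \<Rightarrow> 'b::{real_vector,t2_space}) \<Rightarrow> 'a \<Rightarrow> 'a \<Rightarrow> 'b" where
  "dd f v \<xi> = Lim (at (0::real)) (\<lambda>t. (1 / t) *\<^sub>R (f (v + t *\<^sub>R \<xi>) - f v))"

definition C1 ::
  "'a::{real_vector,topological_space} set \<Rightarrow> ('a \<Rightarrow> 'b::{real_vector,t2_space}) \<Rightarrow> bool" where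
  "C1 U f \<longleftrightarrow> open U \<and> (\<forall>v\<in>U. \<forall>\<xi>. \<exists>d. has_dirderiv f v \<xi> d) \<and>
     continuous_on (U \<times> UNIV) (\<lambda>(v, \<xi>). dd f v \<xi>)"

definition C2 ::
  "'a::{real_vector,topological_space} set \<Rightarrow> ('a \<Rightarrow> 'b::{real_vector,t2_space}) \<Rightarrow> bool" where
  "C2 U f \<longleftrightarrow> C1 U f \<and> C1 (U \<times> UNIV) (\<lambda>(v, \<xi>). dd f v \<xi>)"

definition C1_curve :: "'v::{real_vector,t2_space} set \<Rightarrow> real \<Rightarrow> real \<Rightarrow> (real \<Rightarrow> 'v) \<Rightarrow> bool" where
  "C1_curve S \<alpha> \<beta> x \<longleftrightarrow> (\<exists>U y. open U \<and> {\<alpha>..\<beta>} \<subseteq> U \<and> C1 U y \<and> (\<forall>t\<in>{\<alpha>..\<beta>}. y t = x t))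
     \<and> x ` {\<alpha>..\<beta>} \<subseteq> S"

definition C2_curve :: "'v::{real_vector,t2_space} set \<Rightarrow> real \<Rightarrow> real \<Rightarrow> (real \<Rightarrow> 'v) \<Rightarrow> bool" where
  "C2_curve S \<alpha> \<beta> x \<longleftrightarrow> (\<exists>U y. open U \<and> {\<alpha>..\<beta>} \<subseteq> U \<and> C2 U y \<and> (\<forall>t\<in>{\<alpha>..\<beta>}. y t = x t))
     \<and> x ` {\<alpha>..\<beta>} \<subseteq> S"

text \<open>Velocity of a curve on I (derivative within I; coincides on I with the derivative
of any C^1 extension).\<close>

definition vel :: "real \<Rightarrow> real \<Rightarrow> (real \<Rightarrow> 'v::{real_vector,t2_space}) \<Rightarrow> real \<Rightarrow> 'v" where
  "vel \<alpha> \<beta> x t = Lim (at t within {\<alpha>..\<beta>}) (\<lambda>s. (1 / (s - t)) *\<^sub>R (x s - x t))"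

definition riem_metric ::
  "'v::real_vector set \<Rightarrow> ('v \<Rightarrow> 'v \<Rightarrow> 'v \<Rightarrow> real) \<Rightarrow> bool" where
  "riem_metric \<Omega> g \<longleftrightarrow> (\<forall>v\<in>\<Omega>.
      (\<forall>\<eta>. linear (\<lambda>\<xi>. g v \<xi> \<eta>)) \<and> (\<forall>\<xi>. linear (\<lambda>\<eta>. g v \<xi> \<eta>)) \<and>
      (\<forall>\<xi> \<eta>. g v \<xi> \<eta> = g v \<eta> \<xi>) \<and> (\<forall>\<xi>. \<xi> \<noteq> 0 \<longrightarrow> g v \<xi> \<xi> > 0))"

definition covD :: "('v \<Rightarrow> 'v \<Rightarrow> 'v \<Rightarrow> 'v) \<Rightarrow> 'v \<Rightarrow> ('v \<Rightarrow> 'v) \<Rightarrow> 'v \<Rightarrow> 'v::{real_vector,t2_space}" where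
  "covD A \<xi> \<phi> v = dd \<phi> v \<xi> + A v \<xi> (\<phi> v)"

text \<open>A is (the Christoffel map of) a Levi-Civita connection of the C^1 metric g on Omega.
A v xi w stands for A(v,xi)w.\<close>

definition levi_civita ::
  "'v::{real_vector,t2_space} set \<Rightarrow> ('v \<Rightarrow> 'v \<Rightarrow> 'v \<Rightarrow> real) \<Rightarrow> ('v \<Rightarrow> 'v \<Rightarrow> 'v \<Rightarrow> 'v) \<Rightarrow> bool" where
  "levi_civita \<Omega> g A \<longleftrightarrow>
     C1 (\<Omega> \<times> UNIV \<times> UNIV) (\<lambda>(v, \<xi>, \<eta>). g v \<xi> \<eta>) \<and>
     (\<forall>v\<in>\<Omega>. \<forall>\<xi>. linear (A v \<xi>) \<and> continuous_on UNIV (A v \<xi>)) \<and>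
     (\<forall>v\<in>\<Omega>. \<forall>w. linear (\<lambda>\<xi>. A v \<xi> w)) \<and>
     continuous_on (\<Omega> \<times> UNIV \<times> UNIV) (\<lambda>(v, \<xi>, w). A v \<xi> w) \<and>
     (\<forall>v\<in>\<Omega>. \<forall>\<xi> \<eta>. A v \<xi> \<eta> = A v \<eta> \<xi>) \<and>
     (\<forall>\<xi> \<phi> \<psi>. C1 \<Omega> \<phi> \<and> C1 \<Omega> \<psi> \<longrightarrow>
        (\<forall>v\<in>\<Omega>. has_dirderiv (\<lambda>u. g u (\<phi> u) (\<psi> u)) v \<xi>
                   (g v (covD A \<xi> \<phi> v) (\<psi> v) + g v (\<phi> v) (covD A \<xi> \<psi> v))))"

definition geodesic ::
  "'v::{real_vector,t2_space} set \<Rightarrow> ('v \<Rightarrow> 'v \<Rightarrow> 'v \<Rightarrow> 'v) \<Rightarrow> real \<Rightarrow> real \<Rightarrow> (real \<Rightarrow> 'v) \<Rightarrow> bool" where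
  "geodesic \<Omega> A \<alpha> \<beta> x \<longleftrightarrow> C2_curve \<Omega> \<alpha> \<beta> x \<and>
     (\<forall>t\<in>{\<alpha>..\<beta>}. vel \<alpha> \<beta> (vel \<alpha> \<beta> x) t + A (x t) (vel \<alpha> \<beta> x t) (vel \<alpha> \<beta> x t) = 0)"

definition energy ::
  "('v \<Rightarrow> 'v \<Rightarrow> 'v \<Rightarrow> real) \<Rightarrow> real \<Rightarrow> real \<Rightarrow> (real \<Rightarrow> 'v::{real_vector,t2_space}) \<Rightarrow> real" where
  "energy g \<alpha> \<beta> x = (1 / 2) * integral {\<alpha>..\<beta>} (\<lambda>t. g (x t) (vel \<alpha> \<beta> x t) (vel \<alpha> \<beta> x t))"

definition energy_critical ::
  "'v::{real_vector,t2_space} set \<Rightarrow> ('v \<Rightarrow> 'v \<Rightarrow> 'v \<Rightarrow> real) \<Rightarrow> real \<Rightarrow> real \<Rightarrow> (real \<Rightarrow> 'v) \<Rightarrow> bool" where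
  "energy_critical \<Omega> g \<alpha> \<beta> x \<longleftrightarrow> C1_curve \<Omega> \<alpha> \<beta> x \<and>
     (\<forall>y. C1_curve UNIV \<alpha> \<beta> y \<and> y \<alpha> = 0 \<and> y \<beta> = 0 \<longrightarrow>
        ((\<lambda>s::real. (energy g \<alpha> \<beta> (\<lambda>t. x t + s *\<^sub>R y t) - energy g \<alpha> \<beta> x) / s) \<longlongrightarrow> 0) (at 0))"

end

theory Submission
  imports Defs
begin

definition tvs :: "'e::{real_vector,topological_space} itself \<Rightarrow> bool" where
  "tvs _ \<longleftrightarrow> continuous_on UNIV (\<lambda>(x::'e, y::'e). x + y) \<and>
     continuous_on UNIV (\<lambda>(a::real, x::'e). a *\<^sub>R x)"

lemma lcs_tvs: "lcs TYPE('v::{real_vector,t2_space}) \<Longrightarrow> tvs TYPE('v)"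
  unfolding lcs_def tvs_def by blast

lemma tvs_tendsto_add:
  fixes f g :: "'a \<Rightarrow> 'e::{real_vector,topological_space}"
  assumes "tvs TYPE('e)" "(f \<longlongrightarrow> a) F" "(g \<longlongrightarrow> b) F"
  shows "((\<lambda>x. f x + g x) \<longlongrightarrow> a + b) F"
proof -
  have c: "continuous_on UNIV (\<lambda>(x::'e, y::'e). x + y)" using assms(1) unfolding tvs_def by blast
  have "((\<lambda>x. (\<lambda>(x::'e, y::'e). x + y) (f x, g x)) \<longlongrightarrow> (\<lambda>(x::'e, y::'e). x + y) (a, b)) F"
    by (rule continuous_on_tendsto_compose[OF c tendsto_Pair[OF assms(2,3)]]) auto
  then show ?thesis by simp
qed

lemma tvs_tendsto_scaleR:
  fixes f :: "'a \<Rightarrow> 'e::{real_vector,topological_space}"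
  assumes "tvs TYPE('e)" "(c \<longlongrightarrow> a) F" "(f \<longlongrightarrow> b) F"
  shows "((\<lambda>x. c x *\<^sub>R f x) \<longlongrightarrow> a *\<^sub>R b) F"
proof -
  have c: "continuous_on UNIV (\<lambda>(a::real, x::'e). a *\<^sub>R x)" using assms(1) unfolding tvs_def by blast
  have "((\<lambda>x. (\<lambda>(a::real, x::'e). a *\<^sub>R x) (c x, f x)) \<longlongrightarrow> (\<lambda>(a::real, x::'e). a *\<^sub>R x) (a, b)) F"
    by (rule continuous_on_tendsto_compose[OF c tendsto_Pair[OF assms(2,3)]]) auto
  then show ?thesis by simp
qed

lemma tvs_tendsto_minus:
  fixes f :: "'a \<Rightarrow> 'e::{real_vector,topological_space}"
  assumes "tvs TYPE('e)" "(f \<longlongrightarrow> b) F"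
  shows "((\<lambda>x. - f x) \<longlongrightarrow> - b) F"
  using tvs_tendsto_scaleR[OF assms(1) tendsto_const[of "-1"] assms(2)] by simp

lemma tvs_tendsto_diff:
  fixes f g :: "'a \<Rightarrow> 'e::{real_vector,topological_space}"
  assumes "tvs TYPE('e)" "(f \<longlongrightarrow> a) F" "(g \<longlongrightarrow> b) F"
  shows "((\<lambda>x. f x - g x) \<longlongrightarrow> a - b) F"
  using tvs_tendsto_add[OF assms(1,2) tvs_tendsto_minus[OF assms(1,3)]] by simp

lemma tvs_prod:
  assumes a: "tvs TYPE('a::{real_vector,topological_space})"
    and b: "tvs TYPE('b::{real_vector,topological_space})"
  shows "tvs TYPE('a \<times> 'b)"
proof -
  have 1: "continuous_on UNIV (\<lambda>(x::'a\<times>'b, y::'a\<times>'b). x + y)"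
    unfolding continuous_on_def
  proof (intro ballI)
    fix p :: "('a\<times>'b)\<times>('a\<times>'b)"
    let ?F = "at p within UNIV"
    have t1: "((\<lambda>q. fst (fst q) + fst (snd q)) \<longlongrightarrow> fst (fst p) + fst (snd p)) ?F"
      by (intro tvs_tendsto_add[OF a] tendsto_fst tendsto_snd tendsto_ident_at)
    have t2: "((\<lambda>q. snd (fst q) + snd (snd q)) \<longlongrightarrow> snd (fst p) + snd (snd p)) ?F"
      by (intro tvs_tendsto_add[OF b] tendsto_fst tendsto_snd tendsto_ident_at)
    show "((\<lambda>(x, y). x + y) \<longlongrightarrow> (case p of (x, y) \<Rightarrow> x + y)) ?F"
      using tendsto_Pair[OF t1 t2] by (simp add: split_def plus_prod_def)
  qed
  have 2: "continuous_on UNIV (\<lambda>(c::real, x::'a\<times>'b). c *\<^sub>R x)"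
    unfolding continuous_on_def
  proof (intro ballI)
    fix p :: "real\<times>('a\<times>'b)"
    let ?F = "at p within UNIV"
    have t1: "((\<lambda>q. fst q *\<^sub>R fst (snd q)) \<longlongrightarrow> fst p *\<^sub>R fst (snd p)) ?F"
      by (intro tvs_tendsto_scaleR[OF a] tendsto_fst tendsto_snd tendsto_ident_at)
    have t2: "((\<lambda>q. fst q *\<^sub>R snd (snd q)) \<longlongrightarrow> fst p *\<^sub>R snd (snd p)) ?F"
      by (intro tvs_tendsto_scaleR[OF b] tendsto_fst tendsto_snd tendsto_ident_at)
    show "((\<lambda>(c, x). c *\<^sub>R x) \<longlongrightarrow> (case p of (c, x) \<Rightarrow> c *\<^sub>R x)) ?F"
      using tendsto_Pair[OF t1 t2] by (simp add: split_def scaleR_prod_def)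
  qed
  show ?thesis unfolding tvs_def using 1 2 by blast
qed

lemma tvs_real: "tvs TYPE(real)"
  unfolding tvs_def by (auto intro!: continuous_intros simp: case_prod_beta)

lemma dd_eqI: "has_dirderiv f v \<xi> d \<Longrightarrow> dd f v \<xi> = d"
  unfolding has_dirderiv_def dd_def by (rule tendsto_Lim) auto

lemma C1_has_dirderiv: "C1 U f \<Longrightarrow> v \<in> U \<Longrightarrow> has_dirderiv f v \<xi> (dd f v \<xi>)"
  unfolding C1_def using dd_eqI by metis

lemma has_dirderiv_zero: "has_dirderiv f v 0 0"
  unfolding has_dirderiv_def by simp

lemma dd_zero: "dd f v 0 = 0"
  by (rule dd_eqI[OF has_dirderiv_zero])

lemma dirderiv_line_at:
  fixes G :: "'e::real_vector \<Rightarrow> real"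
  assumes "has_dirderiv G (p + s *\<^sub>R w) w d"
  shows "((\<lambda>\<sigma>. G (p + \<sigma> *\<^sub>R w)) has_real_derivative d) (at s)"
proof -
  have "((\<lambda>h. (1/h) *\<^sub>R (G ((p + s *\<^sub>R w) + h *\<^sub>R w) - G (p + s *\<^sub>R w))) \<longlongrightarrow> d) (at 0)"
    using assms unfolding has_dirderiv_def .
  moreover have "\<And>h. (1/h) *\<^sub>R (G ((p + s *\<^sub>R w) + h *\<^sub>R w) - G (p + s *\<^sub>R w))
      = (G (p + (s + h) *\<^sub>R w) - G (p + s *\<^sub>R w)) / h"
    by (simp add: add.assoc scaleR_add_left add.commute[of "h *\<^sub>R w"] divide_inverse mult.commute)
  ultimately show ?thesis unfolding DERIV_def
    by (simp add: algebra_simps scaleR_add_left diff_divide_distrib)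
qed

lemma C1_line_deriv:
  fixes G :: "'e::{real_vector,topological_space} \<Rightarrow> real"
  assumes "C1 W G" "p + s *\<^sub>R w \<in> W"
  shows "((\<lambda>\<sigma>. G (p + \<sigma> *\<^sub>R w)) has_real_derivative dd G (p + s *\<^sub>R w) w) (at s)"
  by (rule dirderiv_line_at[OF C1_has_dirderiv[OF assms]])

lemma mvt_between:
  fixes f f' :: "real \<Rightarrow> real"
  assumes "\<And>\<sigma>. \<bar>\<sigma>\<bar> \<le> \<bar>t\<bar> \<Longrightarrow> (f has_real_derivative f' \<sigma>) (at \<sigma>)"
  shows "\<exists>\<theta>. \<bar>\<theta>\<bar> \<le> \<bar>t\<bar> \<and> f t - f 0 = t * f' \<theta>"
proof (cases "t = 0")
  case True then show ?thesis by auto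
next
  case False
  show ?thesis
  proof (cases "t > 0")
    case True
    have c: "continuous_on {0..t} f"
      by (rule continuous_at_imp_continuous_on) (metis DERIV_isCont assms True atLeastAtMost_iff abs_of_nonneg order_trans)
    have "\<exists>l z. 0 < z \<and> z < t \<and> (f has_real_derivative l) (at z) \<and> f t - f 0 = (t - 0) * l"
      apply (rule MVT[OF True c])
      subgoal for x using assms[of x] True by (auto simp: real_differentiable_def)
      done
    then obtain l z where "0 < z" "z < t" "(f has_real_derivative l) (at z)" "f t - f 0 = t * l" by auto
    moreover have "l = f' z" using DERIV_unique[OF \<open>(f has_real_derivative l) (at z)\<close>] assms \<open>0<z\<close> \<open>z<t\<close> by auto
    ultimately show ?thesis by (intro exI[of _ z]) auto
  next
    case False
    with \<open>t \<noteq> 0\<close> have tn: "t < 0" by auto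
    have c: "continuous_on {t..0} f"
      by (rule continuous_at_imp_continuous_on) (smt (verit) DERIV_isCont assms tn atLeastAtMost_iff)
    have "\<exists>l z. t < z \<and> z < 0 \<and> (f has_real_derivative l) (at z) \<and> f 0 - f t = (0 - t) * l"
      apply (rule MVT[OF tn c])
      subgoal for x using assms[of x] tn by (auto simp: real_differentiable_def)
      done
    then obtain l z where "t < z" "z < 0" "(f has_real_derivative l) (at z)" "f 0 - f t = (0 - t) * l" by auto
    moreover have "l = f' z" using DERIV_unique[OF \<open>(f has_real_derivative l) (at z)\<close>] assms \<open>t<z\<close> \<open>z<0\<close> by auto
    ultimately show ?thesis by (intro exI[of _ z]) (auto simp: algebra_simps)
  qed
qed

lemma C1_mvt:
  fixes G :: "'e::{real_vector,topological_space} \<Rightarrow> real"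
  assumes "C1 W G" "\<And>\<sigma>. \<bar>\<sigma>\<bar> \<le> \<bar>t\<bar> \<Longrightarrow> p + \<sigma> *\<^sub>R w \<in> W"
  shows "\<exists>\<theta>. \<bar>\<theta>\<bar> \<le> \<bar>t\<bar> \<and> G (p + t *\<^sub>R w) - G p = t * dd G (p + \<theta> *\<^sub>R w) w"
  using mvt_between[of t "\<lambda>\<sigma>. G (p + \<sigma> *\<^sub>R w)" "\<lambda>\<sigma>. dd G (p + \<sigma> *\<^sub>R w) w"]
    C1_line_deriv[OF assms(1) assms(2)] by simp

lemma isCont_small_box:
  fixes f :: "real \<times> real \<Rightarrow> 'a::topological_space"
  assumes "isCont f (0,0)" "open W" "f (0,0) \<in> W"
  shows "\<exists>d>0. \<forall>t \<sigma>. \<bar>t\<bar> < d \<longrightarrow> \<bar>\<sigma>\<bar> \<le> \<bar>t\<bar> \<longrightarrow> f (t,\<sigma>) \<in> W"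
proof -
  have "\<forall>\<^sub>F q in at (0,0). f q \<in> W"
    using assms unfolding continuous_at by (simp add: tendsto_def)
  then obtain d where d: "d > 0" "\<And>q. q \<noteq> (0,0) \<Longrightarrow> dist q (0,0) < d \<Longrightarrow> f q \<in> W"
    unfolding eventually_at by auto
  show ?thesis
  proof (intro exI[of _ "d/2"] conjI allI impI)
    fix t \<sigma> :: real assume "\<bar>t\<bar> < d/2" "\<bar>\<sigma>\<bar> \<le> \<bar>t\<bar>"
    show "f (t,\<sigma>) \<in> W"
    proof (cases "(t,\<sigma>) = (0,0)")
      case True then show ?thesis using assms by simp
    next
      case False
      have "dist (t,\<sigma>) (0,0) \<le> \<bar>t\<bar> + \<bar>\<sigma>\<bar>"
        using norm_Pair_le[of t \<sigma>] by (simp add: dist_norm)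
      then show ?thesis using d False \<open>\<bar>t\<bar> < d/2\<close> \<open>\<bar>\<sigma>\<bar> \<le> \<bar>t\<bar>\<close> by auto
    qed
  qed (use d in auto)
qed

lemma mvt_quot:
  fixes H :: "real \<Rightarrow> real \<Rightarrow> real" and \<Phi> :: "real \<times> real \<Rightarrow> real"
  assumes cont: "isCont \<Phi> (0,0)"
    and der: "\<exists>d>0. \<forall>t \<sigma>. \<bar>t\<bar> < d \<longrightarrow> \<bar>\<sigma>\<bar> \<le> \<bar>t\<bar> \<longrightarrow> (H t has_real_derivative \<Phi> (t,\<sigma>)) (at \<sigma>)"
  shows "((\<lambda>t. (H t t - H t 0) / t) \<longlongrightarrow> \<Phi> (0,0)) (at 0)"
proof (rule tendstoI)
  fix e :: real assume e: "e > 0"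
  obtain d where d: "d > 0" "\<And>t \<sigma>. \<bar>t\<bar> < d \<Longrightarrow> \<bar>\<sigma>\<bar> \<le> \<bar>t\<bar> \<Longrightarrow> (H t has_real_derivative \<Phi> (t,\<sigma>)) (at \<sigma>)"
    using der by blast
  obtain d' where d': "d' > 0" "\<And>t \<sigma>. \<bar>t\<bar> < d' \<Longrightarrow> \<bar>\<sigma>\<bar> \<le> \<bar>t\<bar> \<Longrightarrow> \<Phi> (t,\<sigma>) \<in> ball (\<Phi> (0,0)) e"
    using isCont_small_box[OF cont, of "ball (\<Phi> (0,0)) e"] e by auto
  show "\<forall>\<^sub>F t in at 0. dist ((H t t - H t 0) / t) (\<Phi> (0,0)) < e"
    unfolding eventually_at
  proof (intro exI[of _ "min d d'"] conjI ballI impI)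
    show "0 < min d d'" using d d' by auto
  next
    fix t :: real assume "t \<in> UNIV" and t: "t \<noteq> 0 \<and> dist t 0 < min d d'"
    obtain \<theta> where th: "\<bar>\<theta>\<bar> \<le> \<bar>t\<bar>" "H t t - H t 0 = t * \<Phi> (t,\<theta>)"
      using mvt_between[of t "H t" "\<lambda>\<sigma>. \<Phi> (t,\<sigma>)"] d(2) t by auto
    have "(H t t - H t 0) / t = \<Phi> (t,\<theta>)" using th t by auto
    then show "dist ((H t t - H t 0) / t) (\<Phi> (0,0)) < e"
      using d'(2)[of t \<theta>] th t by (auto simp: dist_commute)
  qed
qed

lemma C1_dd_isCont:
  assumes "C1 W G" "p \<in> W"
  shows "isCont (\<lambda>q. dd G (fst q) (snd q)) (p, w)"
proof -
  have o: "open (W \<times> (UNIV::'a set))" using assms(1) unfolding C1_def by (auto intro: open_Times)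
  have "continuous_on (W \<times> UNIV) (\<lambda>q. dd G (fst q) (snd q))"
    using assms(1) unfolding C1_def by (simp add: case_prod_beta)
  then show ?thesis using continuous_on_eq_continuous_at[OF o] assms(2) by auto
qed

lemma tvs_isCont_lin2:
  fixes a b p :: "'e::{real_vector,t2_space}"
  assumes "tvs TYPE('e)"
  shows "isCont (\<lambda>q::real\<times>real. p + fst q *\<^sub>R a + snd q *\<^sub>R b) x"
  unfolding continuous_at
  by (intro tvs_tendsto_add[OF assms] tvs_tendsto_scaleR[OF assms] tendsto_const
      tendsto_fst tendsto_snd tendsto_ident_at)

lemma C1_isCont:
  fixes G :: "'e::{real_vector,t2_space} \<Rightarrow> real"
  assumes tvs: "tvs TYPE('e)" and C: "C1 W G" and p: "p \<in> W"
  shows "isCont G p"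
  unfolding continuous_at
proof (rule tendstoI)
  fix e :: real assume e: "e > 0"
  have oW: "open W" using C unfolding C1_def by auto
  define \<Psi> where "\<Psi> = (\<lambda>q::'e\<times>real. (p + snd q *\<^sub>R fst q, fst q))"
  define h where "h = (\<lambda>q::'e\<times>real. dd G (p + snd q *\<^sub>R fst q) (fst q))"
  have cPsi: "continuous_on UNIV \<Psi>"
    unfolding \<Psi>_def continuous_on_def
    by (intro ballI tendsto_Pair tvs_tendsto_add[OF tvs] tvs_tendsto_scaleR[OF tvs] tendsto_const
      tendsto_fst tendsto_snd tendsto_ident_at)
  define S1 where "S1 = \<Psi> -` (W \<times> UNIV)"
  have oS1: "open S1" unfolding S1_def
    by (rule open_vimage[OF open_Times[OF oW open_UNIV] cPsi])
  have ch: "continuous_on S1 h"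
  proof -
    have "continuous_on (W \<times> UNIV) (\<lambda>q. dd G (fst q) (snd q))"
      using C unfolding C1_def by (simp add: case_prod_beta)
    moreover have "continuous_on S1 \<Psi>" using cPsi continuous_on_subset by blast
    ultimately have "continuous_on S1 (\<lambda>q. dd G (fst (\<Psi> q)) (snd (\<Psi> q)))"
      by (rule continuous_on_compose2) (auto simp: S1_def)
    then show ?thesis by (simp add: h_def \<Psi>_def)
  qed
  define Ob where "Ob = S1 \<inter> h -` ball 0 e"
  have oO: "open Ob" unfolding Ob_def by (rule continuous_open_preimage[OF ch oS1 open_ball])
  have "{0::'e} \<times> {-1..1::real} \<subseteq> Ob"
    using p e by (auto simp: Ob_def S1_def \<Psi>_def h_def dd_zero)
  then have "\<exists>X0. (0::'e) \<in> X0 \<and> open X0 \<and> X0 \<times> {-1..1::real} \<subseteq> Ob"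
    by (rule Elementary_Topology.tube_lemma[OF compact_Icc oO])
  then obtain V where V: "(0::'e) \<in> V" "open V" "V \<times> {-1..1::real} \<subseteq> Ob"
    by blast
  have oV: "open V" using V(2) by simp
  define N where "N = {x. x - p \<in> V}"
  have "continuous_on UNIV (\<lambda>x::'e. x - p)"
    unfolding continuous_on_def
    by (intro ballI tvs_tendsto_diff[OF tvs] tendsto_const tendsto_ident_at)
  then have oN: "open N" unfolding N_def using open_vimage[OF oV] by (simp add: vimage_def)
  have pN: "p \<in> N" using V(1) by (simp add: N_def)
  show "\<forall>\<^sub>F x in at p. dist (G x) (G p) < e"
    unfolding eventually_at_topological
  proof (intro exI[of _ N] conjI ballI impI oN pN)
    fix x assume "x \<in> N"
    define u where "u = x - p"
    have uV: "u \<in> V" using \<open>x \<in> N\<close> by (simp add: N_def u_def)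
    have inO: "(u, \<sigma>) \<in> Ob" if "\<bar>\<sigma>\<bar> \<le> 1" for \<sigma>
    proof -
      have "(u, \<sigma>) \<in> V \<times> {-1..1}" using uV that by (simp add: abs_le_iff)
      then show ?thesis using V(3) by blast
    qed
    have inW: "p + \<sigma> *\<^sub>R u \<in> W" if "\<bar>\<sigma>\<bar> \<le> \<bar>1\<bar>" for \<sigma>
      using inO[of \<sigma>] that unfolding Ob_def S1_def \<Psi>_def by simp
    obtain \<theta> where th: "\<bar>\<theta>\<bar> \<le> \<bar>1\<bar>" "G (p + 1 *\<^sub>R u) - G p = 1 * dd G (p + \<theta> *\<^sub>R u) u"
      using C1_mvt[OF C inW] by blast
    have "\<bar>dd G (p + \<theta> *\<^sub>R u) u\<bar> < e" using inO[of \<theta>] th(1) unfolding Ob_def h_def by simp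
    moreover have "x = p + 1 *\<^sub>R u" by (simp add: u_def)
    ultimately show "dist (G x) (G p) < e" using th(2) by (simp add: dist_real_def)
  qed
qed

lemma C1_continuous_on:
  fixes G :: "'e::{real_vector,t2_space} \<Rightarrow> real"
  assumes "tvs TYPE('e)" "C1 W G"
  shows "continuous_on W G"
  using C1_isCont[OF assms] by (intro continuous_at_imp_continuous_on) auto

lemma C1_dd_add:
  fixes G :: "'e::{real_vector,t2_space} \<Rightarrow> real"
  assumes tvs: "tvs TYPE('e)" and C: "C1 W G" and p: "p \<in> W"
  shows "dd G p (a + b) = dd G p a + dd G p b"
proof (rule dd_eqI)
  have oW: "open W" using C unfolding C1_def by auto
  have 1: "((\<lambda>t. (G (p + t *\<^sub>R a) - G p) / t) \<longlongrightarrow> dd G p a) (at 0)"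
    using C1_has_dirderiv[OF C p, of a] unfolding has_dirderiv_def by (simp add: divide_inverse mult.commute)
  define H where "H = (\<lambda>t \<sigma>. G ((p + t *\<^sub>R a) + \<sigma> *\<^sub>R b))"
  define \<Phi> where "\<Phi> = (\<lambda>q::real\<times>real. dd G ((p + fst q *\<^sub>R a) + snd q *\<^sub>R b) b)"
  have cont: "isCont \<Phi> (0,0)"
  proof -
    have "isCont (\<lambda>q::real\<times>real. (p + fst q *\<^sub>R a + snd q *\<^sub>R b, b)) (0,0)"
      using tvs_isCont_lin2[OF tvs, where a=a and b=b and p=p and x="(0,0)"] unfolding continuous_at
      by (intro tendsto_Pair) auto
    moreover have "isCont (\<lambda>q. dd G (fst q) (snd q)) ((\<lambda>q::real\<times>real. (p + fst q *\<^sub>R a + snd q *\<^sub>R b, b)) (0,0))"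
      using C1_dd_isCont[OF C p] by simp
    ultimately show ?thesis using isCont_o2 unfolding \<Phi>_def by fastforce
  qed
  obtain d where d: "d > 0" "\<And>t \<sigma>. \<bar>t\<bar> < d \<Longrightarrow> \<bar>\<sigma>\<bar> \<le> \<bar>t\<bar> \<Longrightarrow> p + t *\<^sub>R a + \<sigma> *\<^sub>R b \<in> W"
    using isCont_small_box[OF tvs_isCont_lin2[OF tvs, where a=a and b=b and p=p and x="(0,0)"] oW] p by auto
  have 2: "((\<lambda>t. (H t t - H t 0) / t) \<longlongrightarrow> \<Phi> (0,0)) (at 0)"
  proof (rule mvt_quot[OF cont])
    show "\<exists>d>0. \<forall>t \<sigma>. \<bar>t\<bar> < d \<longrightarrow> \<bar>\<sigma>\<bar> \<le> \<bar>t\<bar> \<longrightarrow> (H t has_real_derivative \<Phi> (t, \<sigma>)) (at \<sigma>)"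
      using d unfolding H_def \<Phi>_def by (auto intro!: C1_line_deriv[OF C])
  qed
  have "((\<lambda>t. (H t t - H t 0) / t + (G (p + t *\<^sub>R a) - G p) / t) \<longlongrightarrow> \<Phi> (0,0) + dd G p a) (at 0)"
    by (rule tendsto_add[OF 2 1])
  moreover have "\<And>t. (H t t - H t 0) / t + (G (p + t *\<^sub>R a) - G p) / t
      = (1 / t) *\<^sub>R (G (p + t *\<^sub>R (a + b)) - G p)"
    by (simp add: H_def scaleR_add_right add.assoc add_divide_distrib[symmetric])
  moreover have "\<Phi> (0,0) = dd G p b" by (simp add: \<Phi>_def)
  ultimately show "has_dirderiv G p (a + b) (dd G p a + dd G p b)"
    unfolding has_dirderiv_def by (simp add: add.commute)
qed

lemma C1_chain:
  fixes G :: "'e::{real_vector,t2_space} \<Rightarrow> real" and c :: "real \<Rightarrow> 'e"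
  assumes tvs: "tvs TYPE('e)" and C: "C1 W G"
    and dc: "((\<lambda>h. (1/h) *\<^sub>R (c (t + h) - c t)) \<longlongrightarrow> c') (at 0)" and ct: "c t \<in> W"
  shows "((\<lambda>s. G (c s)) has_real_derivative dd G (c t) c') (at t)"
proof -
  have oW: "open W" using C unfolding C1_def by auto
  define w where "w = (\<lambda>h::real. if h = 0 then c' else (1/h) *\<^sub>R (c (t + h) - c t))"
  have wc: "isCont w 0"
    unfolding continuous_at
  proof -
    have "\<forall>\<^sub>F h in at (0::real). (1/h) *\<^sub>R (c (t + h) - c t) = w h"
      unfolding eventually_at by (intro exI[of _ 1]) (auto simp: w_def)
    then show "(w \<longlongrightarrow> w 0) (at 0)" using Lim_transform_eventually[OF dc] by (simp add: w_def)
  qed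
  have fst0: "((\<lambda>q::real\<times>real. fst q) \<longlongrightarrow> 0) (at (0,0))"
    using tendsto_fst[OF tendsto_ident_at[of "(0::real,0::real)" UNIV]] by simp
  have cl: "isCont (\<lambda>q::real\<times>real. c t + snd q *\<^sub>R w (fst q)) x" if "x = (0,0)" for x
  proof -
    have "((\<lambda>q::real\<times>real. w (fst q)) \<longlongrightarrow> w 0) (at (0,0))"
      using isCont_tendsto_compose[OF wc fst0] by simp
    then show ?thesis unfolding continuous_at that
      by (intro tvs_tendsto_add[OF tvs] tvs_tendsto_scaleR[OF tvs] tendsto_const
          tendsto_snd tendsto_ident_at, simp)
  qed
  define H where "H = (\<lambda>h \<sigma>. G (c t + \<sigma> *\<^sub>R w h))"
  define \<Phi> where "\<Phi> = (\<lambda>q::real\<times>real. dd G (c t + snd q *\<^sub>R w (fst q)) (w (fst q)))"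
  have cont: "isCont \<Phi> (0,0)"
  proof -
    have "isCont (\<lambda>q::real\<times>real. (c t + snd q *\<^sub>R w (fst q), w (fst q))) (0,0)"
    proof -
      have "((\<lambda>q::real\<times>real. w (fst q)) \<longlongrightarrow> w 0) (at (0,0))"
        using isCont_tendsto_compose[OF wc fst0] by simp
      then show ?thesis using cl[of "(0,0)"] unfolding continuous_at
        by (intro tendsto_Pair) auto
    qed
    moreover have "isCont (\<lambda>q. dd G (fst q) (snd q))
        ((\<lambda>q::real\<times>real. (c t + snd q *\<^sub>R w (fst q), w (fst q))) (0,0))"
      using C1_dd_isCont[OF C ct] by simp
    ultimately show ?thesis using isCont_o2 unfolding \<Phi>_def by fastforce
  qed
  obtain d where d: "d > 0" "\<And>h \<sigma>. \<bar>h\<bar> < d \<Longrightarrow> \<bar>\<sigma>\<bar> \<le> \<bar>h\<bar> \<Longrightarrow> c t + \<sigma> *\<^sub>R w h \<in> W"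
    using isCont_small_box[OF cl[OF refl] oW] ct by auto
  have 2: "((\<lambda>h. (H h h - H h 0) / h) \<longlongrightarrow> \<Phi> (0,0)) (at 0)"
  proof (rule mvt_quot[OF cont])
    show "\<exists>d>0. \<forall>t \<sigma>. \<bar>t\<bar> < d \<longrightarrow> \<bar>\<sigma>\<bar> \<le> \<bar>t\<bar> \<longrightarrow> (H t has_real_derivative \<Phi> (t, \<sigma>)) (at \<sigma>)"
      using d unfolding H_def \<Phi>_def by (auto intro!: C1_line_deriv[OF C])
  qed
  have "\<forall>\<^sub>F h in at (0::real). (H h h - H h 0) / h = (G (c (t + h)) - G (c t)) / h"
    unfolding eventually_at by (intro exI[of _ 1]) (auto simp: H_def w_def)
  from Lim_transform_eventually[OF 2 this] show ?thesis
    unfolding DERIV_def by (simp add: \<Phi>_def w_def)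
qed

lemma Icc_at_nbot:
  fixes \<alpha> \<beta> t :: real
  assumes "\<alpha> < \<beta>" "t \<in> {\<alpha>..\<beta>}"
  shows "at t within {\<alpha>..\<beta>} \<noteq> bot"
proof -
  consider "t = \<alpha>" | "t = \<beta>" | "\<alpha> < t \<and> t < \<beta>" using assms by force
  then show ?thesis
  proof cases
    case 1 then show ?thesis using assms at_within_Icc_at_right[of \<alpha> \<beta>] by simp
  next
    case 2 then show ?thesis using assms at_within_Icc_at_left[of \<alpha> \<beta>] by simp
  next
    case 3 then show ?thesis using at_within_Icc_at[of \<alpha> t \<beta>] by simp
  qed
qed

lemma tvs_continuous_on_add:
  fixes f g :: "'a::topological_space \<Rightarrow> 'e::{real_vector,topological_space}"
  assumes "tvs TYPE('e)" "continuous_on S f" "continuous_on S g"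
  shows "continuous_on S (\<lambda>x. f x + g x)"
  using assms unfolding continuous_on_def by (auto intro: tvs_tendsto_add[OF assms(1)])

lemma tvs_continuous_on_scaleR:
  fixes f :: "'a::topological_space \<Rightarrow> 'e::{real_vector,topological_space}"
  assumes "tvs TYPE('e)" "continuous_on S c" "continuous_on S f"
  shows "continuous_on S (\<lambda>x. c x *\<^sub>R f x)"
  using assms unfolding continuous_on_def by (auto intro: tvs_tendsto_scaleR[OF assms(1)])

lemma C1_curve_tendsto:
  fixes y :: "real \<Rightarrow> 'v::{real_vector,t2_space}"
  assumes "C1 U y" "t \<in> U"
  shows "((\<lambda>h. (1/h) *\<^sub>R (y (t + h) - y t)) \<longlongrightarrow> dd y t 1) (at 0)"
  using C1_has_dirderiv[OF assms, of 1] unfolding has_dirderiv_def by simp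

lemma C1_curve_dcont:
  fixes y :: "real \<Rightarrow> 'v::{real_vector,t2_space}"
  assumes "C1 U y"
  shows "continuous_on U (\<lambda>t. dd y t 1)"
proof -
  have "continuous_on (U \<times> UNIV) (\<lambda>q. dd y (fst q) (snd q))"
    using assms unfolding C1_def by (simp add: case_prod_beta)
  then have "continuous_on U (\<lambda>t. dd y (fst (t, 1::real)) (snd (t, 1::real)))"
    by (rule continuous_on_compose2) (auto intro!: continuous_intros)
  then show ?thesis by simp
qed

lemma at0_to_at:
  fixes f :: "real \<Rightarrow> 'a::topological_space"
  assumes "((\<lambda>h. f (t + h)) \<longlongrightarrow> l) (at 0)"
  shows "(f \<longlongrightarrow> l) (at t)"
proof -
  have "(f \<longlongrightarrow> l) (filtermap (\<lambda>h. h + t) (at 0))"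
    using assms tendsto_compose_filtermap[of f "\<lambda>h. h + t" l "at 0"] by (simp add: o_def add.commute)
  then show ?thesis using at_to_0[of t] by simp
qed

lemma C1_curve_cont:
  fixes y :: "real \<Rightarrow> 'v::{real_vector,t2_space}"
  assumes tvs: "tvs TYPE('v)" and C: "C1 U y"
  shows "continuous_on U y"
proof (rule continuous_at_imp_continuous_on, rule ballI)
  fix t assume t: "t \<in> U"
  have 1: "((\<lambda>h. h *\<^sub>R ((1/h) *\<^sub>R (y (t + h) - y t))) \<longlongrightarrow> 0 *\<^sub>R dd y t 1) (at 0)"
    by (rule tvs_tendsto_scaleR[OF tvs tendsto_ident_at C1_curve_tendsto[OF C t]])
  have "\<forall>\<^sub>F h in at (0::real). h *\<^sub>R ((1/h) *\<^sub>R (y (t + h) - y t)) = y (t + h) - y t"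
    unfolding eventually_at by (intro exI[of _ 1]) auto
  from Lim_transform_eventually[OF 1 this]
  have "((\<lambda>h. y (t + h) - y t) \<longlongrightarrow> 0) (at 0)" by simp
  from tvs_tendsto_add[OF tvs this tendsto_const[of "y t"]]
  have "((\<lambda>h. y (t + h)) \<longlongrightarrow> y t) (at 0)" by simp
  then show "isCont y t" unfolding continuous_at by (rule at0_to_at)
qed

lemma vel_unique:
  assumes "\<alpha> < \<beta>" "t \<in> {\<alpha>..\<beta>}"
    "((\<lambda>s. (1 / (s - t)) *\<^sub>R (x s - x t)) \<longlongrightarrow> v) (at t within {\<alpha>..\<beta>})"
  shows "vel \<alpha> \<beta> x t = v"
  unfolding vel_def by (rule tendsto_Lim[OF Icc_at_nbot[OF assms(1,2)] assms(3)])

lemma ext_vel_tendsto: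
  fixes y x :: "real \<Rightarrow> 'v::{real_vector,t2_space}"
  assumes C: "C1 U y" and IU: "{\<alpha>..\<beta>} \<subseteq> U" and eq: "\<forall>t\<in>{\<alpha>..\<beta>}. y t = x t"
    and t: "t \<in> {\<alpha>..\<beta>}"
  shows "((\<lambda>s. (1 / (s - t)) *\<^sub>R (x s - x t)) \<longlongrightarrow> dd y t 1) (at t within {\<alpha>..\<beta>})"
proof -
  have tU: "t \<in> U" using IU t by auto
  have "((\<lambda>h. (1 / ((t + h) - t)) *\<^sub>R (y (t + h) - y t)) \<longlongrightarrow> dd y t 1) (at 0)"
    using C1_curve_tendsto[OF C tU] by simp
  then have "((\<lambda>s. (1 / (s - t)) *\<^sub>R (y s - y t)) \<longlongrightarrow> dd y t 1) (at t)"
    by (rule at0_to_at)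
  then have 1: "((\<lambda>s. (1 / (s - t)) *\<^sub>R (y s - y t)) \<longlongrightarrow> dd y t 1) (at t within {\<alpha>..\<beta>})"
    by (rule tendsto_within_subset) simp
  have "\<forall>\<^sub>F s in at t within {\<alpha>..\<beta>}. (1 / (s - t)) *\<^sub>R (y s - y t) = (1 / (s - t)) *\<^sub>R (x s - x t)"
    unfolding eventually_at_topological using eq t by (intro exI[of _ UNIV]) auto
  from Lim_transform_eventually[OF 1 this] show ?thesis .
qed

lemma ext_vel:
  fixes y x :: "real \<Rightarrow> 'v::{real_vector,t2_space}"
  assumes "\<alpha> < \<beta>" "C1 U y" "{\<alpha>..\<beta>} \<subseteq> U" "\<forall>t\<in>{\<alpha>..\<beta>}. y t = x t" "t \<in> {\<alpha>..\<beta>}"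
  shows "vel \<alpha> \<beta> x t = dd y t 1"
  by (rule vel_unique[OF assms(1,5) ext_vel_tendsto[OF assms(2-5)]])

lemma vel_comb:
  fixes x y :: "real \<Rightarrow> 'v::{real_vector,t2_space}"
  assumes tvs: "tvs TYPE('v)" and ab: "\<alpha> < \<beta>"
    and x: "C1_curve S \<alpha> \<beta> x" and y: "C1_curve T \<alpha> \<beta> y" and t: "t \<in> {\<alpha>..\<beta>}"
  shows "vel \<alpha> \<beta> (\<lambda>t. x t + c *\<^sub>R y t) t = vel \<alpha> \<beta> x t + c *\<^sub>R vel \<alpha> \<beta> y t"
proof -
  obtain U X where X: "open U" "{\<alpha>..\<beta>} \<subseteq> U" "C1 U X" "\<forall>t\<in>{\<alpha>..\<beta>}. X t = x t"
    using x unfolding C1_curve_def by blast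
  obtain U' Y where Y: "open U'" "{\<alpha>..\<beta>} \<subseteq> U'" "C1 U' Y" "\<forall>t\<in>{\<alpha>..\<beta>}. Y t = y t"
    using y unfolding C1_curve_def by blast
  have 1: "((\<lambda>s. (1 / (s - t)) *\<^sub>R (x s - x t)) \<longlongrightarrow> vel \<alpha> \<beta> x t) (at t within {\<alpha>..\<beta>})"
    using ext_vel_tendsto[OF X(3,2,4) t] ext_vel[OF ab X(3,2,4) t] by simp
  have 2: "((\<lambda>s. (1 / (s - t)) *\<^sub>R (y s - y t)) \<longlongrightarrow> vel \<alpha> \<beta> y t) (at t within {\<alpha>..\<beta>})"
    using ext_vel_tendsto[OF Y(3,2,4) t] ext_vel[OF ab Y(3,2,4) t] by simp
  have "((\<lambda>s. (1 / (s - t)) *\<^sub>R (x s - x t) + c *\<^sub>R ((1 / (s - t)) *\<^sub>R (y s - y t)))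
      \<longlongrightarrow> vel \<alpha> \<beta> x t + c *\<^sub>R vel \<alpha> \<beta> y t) (at t within {\<alpha>..\<beta>})"
    by (intro tvs_tendsto_add[OF tvs 1] tvs_tendsto_scaleR[OF tvs tendsto_const 2])
  moreover have "\<And>s. (1 / (s - t)) *\<^sub>R (x s - x t) + c *\<^sub>R ((1 / (s - t)) *\<^sub>R (y s - y t))
     = (1 / (s - t)) *\<^sub>R ((x s + c *\<^sub>R y s) - (x t + c *\<^sub>R y t))"
    by (simp add: algebra_simps)
  ultimately show ?thesis by (intro vel_unique[OF ab t]) simp
qed

lemma C1_const:
  fixes c :: "'b::{real_vector,t2_space}"
  assumes "open U"
  shows "C1 U (\<lambda>_::'a::{real_vector,topological_space}. c)"
proof -
  have h: "has_dirderiv (\<lambda>_::'a. c) v \<xi> 0" for v \<xi> unfolding has_dirderiv_def by simp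
  have "dd (\<lambda>_::'a. c) v \<xi> = 0" for v \<xi> by (rule dd_eqI[OF h])
  then show ?thesis unfolding C1_def using assms h by (auto simp: case_prod_beta intro: exI[of _ 0])
qed

locale rm =
  fixes \<Omega> :: "'v::{real_vector,t2_space} set"
    and g :: "'v \<Rightarrow> 'v \<Rightarrow> 'v \<Rightarrow> real"
    and A :: "'v \<Rightarrow> 'v \<Rightarrow> 'v \<Rightarrow> 'v"
    and \<alpha> \<beta> :: real
  assumes lcs: "lcs TYPE('v)"
    and oO: "open \<Omega>"
    and ab: "\<alpha> < \<beta>"
    and rmet: "riem_metric \<Omega> g"
    and lc: "levi_civita \<Omega> g A"
begin

definition G3 :: "'v \<times> 'v \<times> 'v \<Rightarrow> real" where "G3 = (\<lambda>(v, \<xi>, \<eta>). g v \<xi> \<eta>)"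
definition W3 :: "('v \<times> 'v \<times> 'v) set" where "W3 = \<Omega> \<times> UNIV \<times> UNIV"

lemma tvsV: "tvs TYPE('v)" by (rule lcs_tvs[OF lcs])
lemma tvs3: "tvs TYPE('v \<times> 'v \<times> 'v)" by (intro tvs_prod tvsV)

lemma gC1: "C1 W3 G3" using lc unfolding levi_civita_def G3_def W3_def by blast

lemma G3_cont: "continuous_on W3 G3" by (rule C1_continuous_on[OF tvs3 gC1])

lemma g_lin1: "v \<in> \<Omega> \<Longrightarrow> linear (\<lambda>\<xi>. g v \<xi> \<eta>)" using rmet unfolding riem_metric_def by blast
lemma g_lin2: "v \<in> \<Omega> \<Longrightarrow> linear (\<lambda>\<eta>. g v \<xi> \<eta>)" using rmet unfolding riem_metric_def by blast
lemma g_sym: "v \<in> \<Omega> \<Longrightarrow> g v \<xi> \<eta> = g v \<eta> \<xi>" using rmet unfolding riem_metric_def by blast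
lemma g_pos: "v \<in> \<Omega> \<Longrightarrow> \<xi> \<noteq> 0 \<Longrightarrow> g v \<xi> \<xi> > 0" using rmet unfolding riem_metric_def by blast

lemma g_add1: "v \<in> \<Omega> \<Longrightarrow> g v (a + b) \<eta> = g v a \<eta> + g v b \<eta>"
  using linear_add[OF g_lin1] by blast
lemma g_add2: "v \<in> \<Omega> \<Longrightarrow> g v \<xi> (a + b) = g v \<xi> a + g v \<xi> b"
  using linear_add[OF g_lin2] by blast
lemma g_scale1: "v \<in> \<Omega> \<Longrightarrow> g v (c *\<^sub>R a) \<eta> = c * g v a \<eta>"
  using linear_scale[OF g_lin1] by (simp)
lemma g_scale2: "v \<in> \<Omega> \<Longrightarrow> g v \<xi> (c *\<^sub>R a) = c * g v \<xi> a"
  using linear_scale[OF g_lin2] by (simp)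
lemma g_diff1: "v \<in> \<Omega> \<Longrightarrow> g v (a - b) \<eta> = g v a \<eta> - g v b \<eta>"
  using linear_diff[OF g_lin1] by blast
lemma g_diff2: "v \<in> \<Omega> \<Longrightarrow> g v \<xi> (a - b) = g v \<xi> a - g v \<xi> b"
  using linear_diff[OF g_lin2] by blast
lemma g_zero1: "v \<in> \<Omega> \<Longrightarrow> g v 0 \<eta> = 0"
  using linear_0[OF g_lin1] by blast
lemma g_zero2: "v \<in> \<Omega> \<Longrightarrow> g v \<xi> 0 = 0"
  using linear_0[OF g_lin2] by blast

lemma A_lin: "v \<in> \<Omega> \<Longrightarrow> linear (A v \<xi>)" using lc unfolding levi_civita_def by blast
lemma A_lin2: "v \<in> \<Omega> \<Longrightarrow> linear (\<lambda>\<xi>. A v \<xi> w)" using lc unfolding levi_civita_def by blast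
lemma A_sym: "v \<in> \<Omega> \<Longrightarrow> A v \<xi> \<eta> = A v \<eta> \<xi>" using lc unfolding levi_civita_def by blast
lemma A_cont: "continuous_on (\<Omega> \<times> UNIV \<times> UNIV) (\<lambda>(v, \<xi>, w). A v \<xi> w)"
  using lc unfolding levi_civita_def by blast

lemma dd_G3_2: "v \<in> \<Omega> \<Longrightarrow> dd G3 (v, \<xi>, \<eta>) (0, a, 0) = g v a \<eta>"
proof (rule dd_eqI)
  assume v: "v \<in> \<Omega>"
  have "\<forall>\<^sub>F t in at (0::real). g v a \<eta> = (1 / t) *\<^sub>R (G3 ((v, \<xi>, \<eta>) + t *\<^sub>R (0, a, 0)) - G3 (v, \<xi>, \<eta>))"
    unfolding eventually_at by (intro exI[of _ 1]) (auto simp: G3_def g_add1[OF v] g_scale1[OF v])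
  from Lim_transform_eventually[OF tendsto_const this]
  show "has_dirderiv G3 (v, \<xi>, \<eta>) (0, a, 0) (g v a \<eta>)" unfolding has_dirderiv_def .
qed

lemma dd_G3_3: "v \<in> \<Omega> \<Longrightarrow> dd G3 (v, \<xi>, \<eta>) (0, 0, b) = g v \<xi> b"
proof (rule dd_eqI)
  assume v: "v \<in> \<Omega>"
  have "\<forall>\<^sub>F t in at (0::real). g v \<xi> b = (1 / t) *\<^sub>R (G3 ((v, \<xi>, \<eta>) + t *\<^sub>R (0, 0, b)) - G3 (v, \<xi>, \<eta>))"
    unfolding eventually_at by (intro exI[of _ 1]) (auto simp: G3_def g_add2[OF v] g_scale2[OF v])
  from Lim_transform_eventually[OF tendsto_const this]
  show "has_dirderiv G3 (v, \<xi>, \<eta>) (0, 0, b) (g v \<xi> b)" unfolding has_dirderiv_def .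
qed

lemma dd_G3_1: "v \<in> \<Omega> \<Longrightarrow> dd G3 (v, \<xi>, \<eta>) (a, 0, 0) = g v (A v a \<xi>) \<eta> + g v \<xi> (A v a \<eta>)"
proof (rule dd_eqI)
  assume v: "v \<in> \<Omega>"
  have comp: "\<forall>\<xi> \<phi> \<psi>. C1 \<Omega> \<phi> \<and> C1 \<Omega> \<psi> \<longrightarrow>
        (\<forall>v\<in>\<Omega>. has_dirderiv (\<lambda>u. g u (\<phi> u) (\<psi> u)) v \<xi>
                   (g v (covD A \<xi> \<phi> v) (\<psi> v) + g v (\<phi> v) (covD A \<xi> \<psi> v)))"
    using lc unfolding levi_civita_def by blast
  have "has_dirderiv (\<lambda>u. g u \<xi> \<eta>) v a
      (g v (covD A a (\<lambda>_. \<xi>) v) \<eta> + g v \<xi> (covD A a (\<lambda>_. \<eta>) v))"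
    using comp C1_const[OF oO] v by fastforce
  moreover have "covD A a (\<lambda>_. c) v = A v a c" for c
    unfolding covD_def using dd_eqI[of "\<lambda>_::'v. c" v a 0] by (simp add: has_dirderiv_def)
  ultimately show "has_dirderiv G3 (v, \<xi>, \<eta>) (a, 0, 0) (g v (A v a \<xi>) \<eta> + g v \<xi> (A v a \<eta>))"
    unfolding has_dirderiv_def G3_def by simp
qed

lemma dd_G3: "v \<in> \<Omega> \<Longrightarrow> dd G3 (v, \<xi>, \<eta>) (a, b, c)
    = g v (A v a \<xi>) \<eta> + g v \<xi> (A v a \<eta>) + g v b \<eta> + g v \<xi> c"
proof -
  assume v: "v \<in> \<Omega>"
  have p: "(v, \<xi>, \<eta>) \<in> W3" using v by (simp add: W3_def)
  have "(a, b, c) = (a, 0, 0) + ((0, b, 0) + (0, 0, c))" by simp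
  then have "dd G3 (v, \<xi>, \<eta>) (a, b, c) = dd G3 (v, \<xi>, \<eta>) (a, 0, 0) + (dd G3 (v, \<xi>, \<eta>) (0, b, 0) + dd G3 (v, \<xi>, \<eta>) (0, 0, c))"
    using C1_dd_add[OF tvs3 gC1 p] by metis
  then show ?thesis using dd_G3_1[OF v] dd_G3_2[OF v] dd_G3_3[OF v] by simp
qed

lemma g_chain:
  fixes c1 c2 c3 :: "real \<Rightarrow> 'v"
  assumes d1: "((\<lambda>h. (1/h) *\<^sub>R (c1 (t + h) - c1 t)) \<longlongrightarrow> e1) (at 0)"
    and d2: "((\<lambda>h. (1/h) *\<^sub>R (c2 (t + h) - c2 t)) \<longlongrightarrow> e2) (at 0)"
    and d3: "((\<lambda>h. (1/h) *\<^sub>R (c3 (t + h) - c3 t)) \<longlongrightarrow> e3) (at 0)"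
    and ct: "c1 t \<in> \<Omega>"
  shows "((\<lambda>s. g (c1 s) (c2 s) (c3 s)) has_real_derivative
     g (c1 t) (A (c1 t) e1 (c2 t)) (c3 t) + g (c1 t) (c2 t) (A (c1 t) e1 (c3 t))
     + g (c1 t) e2 (c3 t) + g (c1 t) (c2 t) e3) (at t)"
proof -
  define c where "c = (\<lambda>s. (c1 s, c2 s, c3 s))"
  have "((\<lambda>h. (1/h) *\<^sub>R (c (t + h) - c t)) \<longlongrightarrow> (e1, e2, e3)) (at 0)"
    using tendsto_Pair[OF d1 tendsto_Pair[OF d2 d3]] by (simp add: c_def)
  from C1_chain[OF tvs3 gC1 this] ct
  have "((\<lambda>s. G3 (c s)) has_real_derivative dd G3 (c t) (e1, e2, e3)) (at t)"
    by (simp add: c_def W3_def)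
  then show ?thesis using dd_G3[OF ct] by (simp add: c_def G3_def)
qed

end

context rm begin

definition JJ :: "(real \<Rightarrow> 'v) \<Rightarrow> (real \<Rightarrow> 'v) \<Rightarrow> real \<Rightarrow> real" where
  "JJ x y t = g (x t) (A (x t) (y t) (vel \<alpha> \<beta> x t)) (vel \<alpha> \<beta> x t)
            + g (x t) (vel \<alpha> \<beta> x t) (vel \<alpha> \<beta> y t)"

lemma curve_ext:
  fixes x :: "real \<Rightarrow> 'v"
  assumes "C1_curve S \<alpha> \<beta> x"
  obtains U X where "open U" "{\<alpha>..\<beta>} \<subseteq> U" "C1 U X" "\<forall>t\<in>{\<alpha>..\<beta>}. X t = x t"
    "continuous_on U X" "continuous_on U (\<lambda>t. dd X t 1)"
    "\<forall>t\<in>{\<alpha>..\<beta>}. vel \<alpha> \<beta> x t = dd X t 1" "x ` {\<alpha>..\<beta>} \<subseteq> S"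
proof -
  obtain U X where X: "open U" "{\<alpha>..\<beta>} \<subseteq> U" "C1 U X" "\<forall>t\<in>{\<alpha>..\<beta>}. X t = x t"
    using assms unfolding C1_curve_def by blast
  show ?thesis
    by (rule that[OF X C1_curve_cont[OF tvsV X(3)] C1_curve_dcont[OF X(3)]])
       (use ext_vel[OF ab X(3,2,4)] assms in \<open>auto simp: C1_curve_def\<close>)
qed

lemma curve_tube:
  assumes U: "open U" "{\<alpha>..\<beta>} \<subseteq> U" and cX: "continuous_on U X" and cY: "continuous_on U Y"
    and XI: "\<forall>t\<in>{\<alpha>..\<beta>}. X t \<in> \<Omega>"
  obtains \<delta> where "\<delta> > 0" "\<And>t \<sigma>. t \<in> {\<alpha>..\<beta>} \<Longrightarrow> \<bar>\<sigma>\<bar> \<le> \<delta> \<Longrightarrow> X t + \<sigma> *\<^sub>R Y t \<in> \<Omega>"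
proof -
  define f where "f = (\<lambda>q::real\<times>real. X (snd q) + fst q *\<^sub>R Y (snd q))"
  have cf: "continuous_on (UNIV \<times> U) f"
    unfolding f_def
    by (intro tvs_continuous_on_add[OF tvsV] tvs_continuous_on_scaleR[OF tvsV]
        continuous_on_fst continuous_on_id
        continuous_on_compose2[OF cX continuous_on_snd[OF continuous_on_id]]
        continuous_on_compose2[OF cY continuous_on_snd[OF continuous_on_id]]) auto
  have oOb: "open ((UNIV \<times> U) \<inter> f -` \<Omega>)"
    by (rule continuous_open_preimage[OF cf open_Times[OF open_UNIV U(1)] oO])
  have "{0::real} \<times> {\<alpha>..\<beta>} \<subseteq> (UNIV \<times> U) \<inter> f -` \<Omega>"
    using U(2) XI by (auto simp: f_def)
  then have "\<exists>X0. (0::real) \<in> X0 \<and> open X0 \<and> X0 \<times> {\<alpha>..\<beta>} \<subseteq> (UNIV \<times> U) \<inter> f -` \<Omega>"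
    by (rule Elementary_Topology.tube_lemma[OF compact_Icc oOb])
  then obtain V where V: "(0::real) \<in> V" "open V" "V \<times> {\<alpha>..\<beta>} \<subseteq> (UNIV \<times> U) \<inter> f -` \<Omega>"
    by blast
  obtain e where e: "e > 0" "ball 0 e \<subseteq> V" using V(1,2) open_contains_ball by blast
  show ?thesis
  proof (rule that[of "e/2"])
    show "e/2 > 0" using e by simp
    fix t \<sigma> assume t: "t \<in> {\<alpha>..\<beta>}" and s: "\<bar>\<sigma>\<bar> \<le> e/2"
    have "\<sigma> \<in> V" using e s by (auto simp: subset_eq dist_real_def)
    then have "(\<sigma>, t) \<in> V \<times> {\<alpha>..\<beta>}" using t by simp
    then have "(\<sigma>, t) \<in> (UNIV \<times> U) \<inter> f -` \<Omega>" using V(3) by blast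
    then show "X t + \<sigma> *\<^sub>R Y t \<in> \<Omega>" by (simp add: f_def)
  qed
qed


lemma energy_deriv:
  fixes x y :: "real \<Rightarrow> 'v"
  assumes x: "C1_curve \<Omega> \<alpha> \<beta> x" and y: "C1_curve UNIV \<alpha> \<beta> y"
  shows "((\<lambda>s. (energy g \<alpha> \<beta> (\<lambda>t. x t + s *\<^sub>R y t) - energy g \<alpha> \<beta> x) / s)
           \<longlongrightarrow> integral {\<alpha>..\<beta>} (JJ x y)) (at 0)"
proof -
  let ?I = "{\<alpha>..\<beta>}"
  obtain U1 X where X: "open U1" "?I \<subseteq> U1" "C1 U1 X" "\<forall>t\<in>?I. X t = x t"
    "continuous_on U1 X" "continuous_on U1 (\<lambda>t. dd X t 1)"
    "\<forall>t\<in>?I. vel \<alpha> \<beta> x t = dd X t 1" "x ` ?I \<subseteq> \<Omega>"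
    by (rule curve_ext[OF x])
  obtain U2 Y where Y: "open U2" "?I \<subseteq> U2" "C1 U2 Y" "\<forall>t\<in>?I. Y t = y t"
    "continuous_on U2 Y" "continuous_on U2 (\<lambda>t. dd Y t 1)"
    "\<forall>t\<in>?I. vel \<alpha> \<beta> y t = dd Y t 1"
    by (rule curve_ext[OF y])
  define U where "U = U1 \<inter> U2"
  have oU: "open U" and IU: "?I \<subseteq> U" using X Y by (auto simp: U_def)
  have cX: "continuous_on U X" and cX': "continuous_on U (\<lambda>t. dd X t 1)"
   and cY: "continuous_on U Y" and cY': "continuous_on U (\<lambda>t. dd Y t 1)"
    using X(5,6) Y(5,6) continuous_on_subset unfolding U_def by blast+
  have XI: "\<forall>t\<in>?I. X t \<in> \<Omega>" using X(4,8) by auto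
  obtain \<delta> where dl: "\<delta> > 0" "\<And>t \<sigma>. t \<in> ?I \<Longrightarrow> \<bar>\<sigma>\<bar> \<le> \<delta> \<Longrightarrow> X t + \<sigma> *\<^sub>R Y t \<in> \<Omega>"
    using curve_tube[OF oU IU cX cY XI] by blast
  define P where "P = (\<lambda>t. (X t, dd X t 1, dd X t 1))"
  define Q where "Q = (\<lambda>t. (Y t, dd Y t 1, dd Y t 1))"
  have cP: "continuous_on U P" unfolding P_def by (intro continuous_on_Pair cX cX')
  have cQ: "continuous_on U Q" unfolding Q_def by (intro continuous_on_Pair cY cY')
  define K where "K = ?I \<times> {-\<delta>..\<delta>}"
  define M where "M = (\<lambda>q::real\<times>real. (P (fst q) + snd q *\<^sub>R Q (fst q), Q (fst q)))"
  have fK: "fst ` K \<subseteq> U" using IU by (auto simp: K_def)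
  have cPf: "continuous_on K (\<lambda>q. P (fst q))"
    by (rule continuous_on_compose2[OF cP continuous_on_fst[OF continuous_on_id] fK])
  have cQf: "continuous_on K (\<lambda>q. Q (fst q))"
    by (rule continuous_on_compose2[OF cQ continuous_on_fst[OF continuous_on_id] fK])
  have cM: "continuous_on K M" unfolding M_def
    by (intro continuous_on_Pair tvs_continuous_on_add[OF tvs3] tvs_continuous_on_scaleR[OF tvs3]
        cPf cQf continuous_on_snd continuous_on_id)
  have MK: "M ` K \<subseteq> W3 \<times> UNIV"
  proof
    fix z assume "z \<in> M ` K"
    then obtain t \<sigma> where z: "z = M (t, \<sigma>)" "t \<in> ?I" "\<bar>\<sigma>\<bar> \<le> \<delta>" by (auto simp: K_def)
    show "z \<in> W3 \<times> UNIV" using dl(2)[OF z(2,3)] by (simp add: z M_def P_def Q_def W3_def)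
  qed
  have cdd: "continuous_on (W3 \<times> UNIV) (\<lambda>q. dd G3 (fst q) (snd q))"
    using gC1 unfolding C1_def by (simp add: case_prod_beta)
  define \<Phi> where "\<Phi> = (\<lambda>q. dd G3 (fst (M q)) (snd (M q)))"
  have c\<Phi>: "continuous_on K \<Phi>" unfolding \<Phi>_def
    by (rule continuous_on_compose2[OF cdd cM MK])
  have uc: "uniformly_continuous_on K \<Phi>"
    by (rule compact_uniformly_continuous[OF c\<Phi>]) (auto simp: K_def intro: compact_Times)
  define F where "F = (\<lambda>s t. G3 (P t + s *\<^sub>R Q t))"
  have Fc: "continuous_on ?I (F s)" if "\<bar>s\<bar> \<le> \<delta>" for s
  proof -
    have "continuous_on ?I (\<lambda>t. P t + s *\<^sub>R Q t)"
      using IU by (intro tvs_continuous_on_add[OF tvs3] tvs_continuous_on_scaleR[OF tvs3]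
          continuous_on_const continuous_on_subset[OF cP] continuous_on_subset[OF cQ])
    moreover have "(\<lambda>t. P t + s *\<^sub>R Q t) ` ?I \<subseteq> W3"
      using dl(2) that by (auto simp: P_def Q_def W3_def)
    ultimately show ?thesis unfolding F_def by (rule continuous_on_compose2[OF G3_cont])
  qed
  have E: "energy g \<alpha> \<beta> (\<lambda>t. x t + s *\<^sub>R y t) = 1/2 * integral ?I (F s)" for s
    unfolding energy_def
  proof (intro arg_cong[where f="\<lambda>z. 1/2 * z"] integral_cong)
    fix t assume t: "t \<in> ?I"
    show "g (x t + s *\<^sub>R y t) (vel \<alpha> \<beta> (\<lambda>t. x t + s *\<^sub>R y t) t) (vel \<alpha> \<beta> (\<lambda>t. x t + s *\<^sub>R y t) t) = F s t"
      using vel_comb[OF tvsV ab x y t, of s] X(4,7) Y(4,7) t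
      by (simp add: F_def G3_def P_def Q_def)
  qed
  have E0: "energy g \<alpha> \<beta> x = 1/2 * integral ?I (F 0)"
    using E[of 0] by simp
  have mvt: "\<exists>\<theta>. \<bar>\<theta>\<bar> \<le> \<bar>s\<bar> \<and> F s t - F 0 t = s * \<Phi> (t, \<theta>)"
    if t: "t \<in> ?I" and s: "\<bar>s\<bar> \<le> \<delta>" for s t
  proof -
    have "\<And>\<sigma>. \<bar>\<sigma>\<bar> \<le> \<bar>s\<bar> \<Longrightarrow> P t + \<sigma> *\<^sub>R Q t \<in> W3"
      using dl(2)[OF t] s by (auto simp: P_def Q_def W3_def)
    from C1_mvt[OF gC1 this] show ?thesis by (simp add: F_def \<Phi>_def M_def)
  qed
  have c\<Phi>0: "continuous_on ?I (\<lambda>t. \<Phi> (t, 0))"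
    by (rule continuous_on_compose2[OF c\<Phi>]) (use dl(1) in \<open>auto simp: K_def intro!: continuous_intros\<close>)
  have \<Phi>0: "\<Phi> (t, 0) = 2 * JJ x y t" if t: "t \<in> ?I" for t
  proof -
    have xt: "x t \<in> \<Omega>" using X(8) t by auto
    show ?thesis
      using dd_G3[OF xt] X(4,7) Y(4,7) t g_sym[OF xt]
      by (simp add: \<Phi>_def M_def P_def Q_def JJ_def)
  qed
  have int\<Phi>0: "integral ?I (\<lambda>t. \<Phi> (t, 0)) = 2 * integral ?I (JJ x y)"
  proof -
    have "integral ?I (\<lambda>t. \<Phi> (t, 0)) = integral ?I (\<lambda>t. 2 * JJ x y t)"
      by (rule integral_cong) (simp add: \<Phi>0)
    then show ?thesis by (simp add: integral_mult_right)
  qed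
  show ?thesis
  proof (rule tendstoI)
    fix e :: real assume e: "e > 0"
    define \<epsilon> where "\<epsilon> = e / (\<beta> - \<alpha>)"
    have \<epsilon>: "\<epsilon> > 0" using e ab by (simp add: \<epsilon>_def)
    obtain d where d: "d > 0" "\<And>p p'. p \<in> K \<Longrightarrow> p' \<in> K \<Longrightarrow> dist p' p < d \<Longrightarrow> dist (\<Phi> p') (\<Phi> p) < \<epsilon>"
      using uc \<epsilon> unfolding uniformly_continuous_on_def by metis
    show "\<forall>\<^sub>F s in at 0. dist ((energy g \<alpha> \<beta> (\<lambda>t. x t + s *\<^sub>R y t) - energy g \<alpha> \<beta> x) / s)
                               (integral ?I (JJ x y)) < e"
      unfolding eventually_at
    proof (intro exI[of _ "min d \<delta>"] conjI ballI impI)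
      show "0 < min d \<delta>" using d dl by simp
    next
      fix s :: real assume "s \<in> UNIV" and s: "s \<noteq> 0 \<and> dist s 0 < min d \<delta>"
      have sd: "\<bar>s\<bar> \<le> \<delta>" using s by simp
      have iFs: "F s integrable_on ?I" and iF0: "F 0 integrable_on ?I"
        using Fc[OF sd] Fc[of 0] dl(1) by (auto intro: integrable_continuous_interval)
      have i\<Phi>: "(\<lambda>t. \<Phi> (t, 0)) integrable_on ?I" by (rule integrable_continuous_interval[OF c\<Phi>0])
      have cq: "continuous_on ?I (\<lambda>t. (F s t - F 0 t) / s)"
        using Fc[OF sd] Fc[of 0] dl(1) s by (auto intro!: continuous_intros)
      have iq: "(\<lambda>t. (F s t - F 0 t) / s) integrable_on ?I" by (rule integrable_continuous_interval[OF cq])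
      have "(energy g \<alpha> \<beta> (\<lambda>t. x t + s *\<^sub>R y t) - energy g \<alpha> \<beta> x) / s
          = 1/2 * (integral ?I (\<lambda>t. (F s t - F 0 t) / s))"
      proof -
        have D: "integral ?I (\<lambda>t. F s t - F 0 t) = 2 * (energy g \<alpha> \<beta> (\<lambda>t. x t + s *\<^sub>R y t) - energy g \<alpha> \<beta> x)"
          using E[of s] E0 integral_diff[OF iFs iF0] by simp
        have "integral ?I (\<lambda>t. (F s t - F 0 t) / s) = integral ?I (\<lambda>t. F s t - F 0 t) / s"
          by (rule integral_divide)
        moreover have "1/2 * (2 * z / s) = z / s" for z :: real by simp
        ultimately show ?thesis by (simp only: D)
      qed
      moreover have "integral ?I (JJ x y) = 1/2 * integral ?I (\<lambda>t. \<Phi> (t, 0))" using int\<Phi>0 by simp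
      ultimately have eq: "(energy g \<alpha> \<beta> (\<lambda>t. x t + s *\<^sub>R y t) - energy g \<alpha> \<beta> x) / s - integral ?I (JJ x y)
          = 1/2 * integral ?I (\<lambda>t. (F s t - F 0 t) / s - \<Phi> (t, 0))"
        using integral_diff[OF iq i\<Phi>] by (simp add: algebra_simps)
      have bnd: "norm (integral ?I (\<lambda>t. (F s t - F 0 t) / s - \<Phi> (t, 0))) \<le> \<epsilon> * (\<beta> - \<alpha>)"
      proof (rule integral_bound)
        show "\<alpha> \<le> \<beta>" using ab by simp
        show "continuous_on ?I (\<lambda>t. (F s t - F 0 t) / s - \<Phi> (t, 0))"
          by (intro continuous_intros cq c\<Phi>0)
        fix t assume t: "t \<in> ?I"
        obtain \<theta> where th: "\<bar>\<theta>\<bar> \<le> \<bar>s\<bar>" "F s t - F 0 t = s * \<Phi> (t, \<theta>)"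
          using mvt[OF t sd] by blast
        have "(F s t - F 0 t) / s = \<Phi> (t, \<theta>)" using th s by simp
        moreover have "dist (\<Phi> (t, \<theta>)) (\<Phi> (t, 0)) < \<epsilon>"
        proof (rule d(2))
          show "(t, 0) \<in> K" "(t, \<theta>) \<in> K" using t dl(1) th(1) sd by (auto simp: K_def)
          show "dist (t, \<theta>) (t, 0) < d" using th(1) s by (simp add: dist_Pair_Pair dist_real_def)
        qed
        ultimately show "norm ((F s t - F 0 t) / s - \<Phi> (t, 0)) \<le> \<epsilon>" by (simp add: dist_real_def)
      qed
      have ee: "\<epsilon> * (\<beta> - \<alpha>) = e" using ab by (simp add: \<epsilon>_def)
      show "dist ((energy g \<alpha> \<beta> (\<lambda>t. x t + s *\<^sub>R y t) - energy g \<alpha> \<beta> x) / s) (integral ?I (JJ x y)) < e"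
        unfolding dist_real_def eq using bnd e ee by (simp add: abs_mult)
    qed
  qed
qed

end

lemma ftc_real:
  fixes k k' :: "real \<Rightarrow> real"
  assumes "\<alpha> \<le> \<beta>" "\<And>t. t \<in> {\<alpha>..\<beta>} \<Longrightarrow> (k has_real_derivative k' t) (at t within {\<alpha>..\<beta>})"
  shows "integral {\<alpha>..\<beta>} k' = k \<beta> - k \<alpha>"
  by (rule integral_unique, rule fundamental_theorem_of_calculus[OF assms(1)])
     (use assms(2) in \<open>auto simp: has_real_derivative_iff_has_vector_derivative\<close>)

lemma deriv_within_cont:
  fixes k k' :: "real \<Rightarrow> real"
  assumes "\<And>t. t \<in> S \<Longrightarrow> (k has_real_derivative k' t) (at t within S)"
  shows "continuous_on S k"
  using assms DERIV_continuous continuous_on_eq_continuous_within by blast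

lemma ibp_zero:
  fixes a \<phi> \<phi>' :: "real \<Rightarrow> real"
  assumes ab: "\<alpha> < \<beta>" and ca: "continuous_on {\<alpha>..\<beta>} a"
    and d\<phi>: "\<And>t. t \<in> {\<alpha>..\<beta>} \<Longrightarrow> (\<phi> has_real_derivative \<phi>' t) (at t within {\<alpha>..\<beta>})"
    and c\<phi>': "continuous_on {\<alpha>..\<beta>} \<phi>'" and z: "\<phi> \<alpha> = 0" "\<phi> \<beta> = 0"
  shows "integral {\<alpha>..\<beta>} (\<lambda>t. \<phi> t * a t) = - integral {\<alpha>..\<beta>} (\<lambda>t. \<phi>' t * integral {\<alpha>..t} a)"
proof -
  let ?I = "{\<alpha>..\<beta>}"
  define Aa where "Aa = (\<lambda>t. integral {\<alpha>..t} a)"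
  have dA: "(Aa has_real_derivative a t) (at t within ?I)" if "t \<in> ?I" for t
    using integral_has_vector_derivative[OF ca that] unfolding Aa_def
    by (simp add: has_real_derivative_iff_has_vector_derivative)
  have cA: "continuous_on ?I Aa" by (rule deriv_within_cont[OF dA])
  have c\<phi>: "continuous_on ?I \<phi>" by (rule deriv_within_cont[OF d\<phi>])
  have "integral ?I (\<lambda>t. \<phi> t * a t + \<phi>' t * Aa t) = \<phi> \<beta> * Aa \<beta> - \<phi> \<alpha> * Aa \<alpha>"
  proof (rule ftc_real)
    show "\<alpha> \<le> \<beta>" using ab by simp
    fix t assume t: "t \<in> ?I"
    show "((\<lambda>t. \<phi> t * Aa t) has_real_derivative \<phi> t * a t + \<phi>' t * Aa t) (at t within ?I)"
      using DERIV_mult[OF d\<phi>[OF t] dA[OF t]] by (simp add: algebra_simps)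
  qed
  moreover have "integral ?I (\<lambda>t. \<phi> t * a t + \<phi>' t * Aa t)
      = integral ?I (\<lambda>t. \<phi> t * a t) + integral ?I (\<lambda>t. \<phi>' t * Aa t)"
    by (intro integral_add integrable_continuous_interval continuous_intros ca cA c\<phi> c\<phi>')
  ultimately show ?thesis using z by (simp add: Aa_def)
qed

lemma DBR:
  fixes a b :: "real \<Rightarrow> real"
  assumes ab: "\<alpha> < \<beta>" and ca: "continuous_on {\<alpha>..\<beta>} a" and cb: "continuous_on {\<alpha>..\<beta>} b"
    and H: "\<And>\<phi> \<phi>' U. open U \<Longrightarrow> {\<alpha>..\<beta>} \<subseteq> U \<Longrightarrow> (\<forall>t\<in>U. (\<phi> has_real_derivative \<phi>' t) (at t))
       \<Longrightarrow> continuous_on U \<phi>' \<Longrightarrow> \<phi> \<alpha> = 0 \<Longrightarrow> \<phi> \<beta> = 0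
       \<Longrightarrow> integral {\<alpha>..\<beta>} (\<lambda>t. \<phi> t * a t + \<phi>' t * b t) = 0"
    and t: "t \<in> {\<alpha>..\<beta>}"
  shows "(b has_real_derivative a t) (at t within {\<alpha>..\<beta>})"
proof -
  let ?I = "{\<alpha>..\<beta>}"
  define Aa where "Aa = (\<lambda>t. integral {\<alpha>..t} a)"
  have dA: "(Aa has_real_derivative a t) (at t within ?I)" if "t \<in> ?I" for t
    using integral_has_vector_derivative[OF ca that] unfolding Aa_def
    by (simp add: has_real_derivative_iff_has_vector_derivative)
  have cA: "continuous_on ?I Aa" by (rule deriv_within_cont[OF dA])
  define c where "c = integral ?I (\<lambda>t. b t - Aa t) / (\<beta> - \<alpha>)"
  define h where "h = (\<lambda>t. b t - Aa t - c)"
  have ch: "continuous_on ?I h" unfolding h_def by (intro continuous_intros cb cA)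
  have ih0: "integral ?I h = 0"
  proof -
    have "integral ?I h = integral ?I (\<lambda>t. b t - Aa t) - integral ?I (\<lambda>t. c)"
      unfolding h_def by (intro integral_diff integrable_continuous_interval continuous_intros cb cA)
    then show ?thesis using ab by (simp add: c_def)
  qed
  define cl where "cl = (\<lambda>t::real. max \<alpha> (min \<beta> t))"
  define h' where "h' = (\<lambda>t. h (cl t))"
  have clI: "cl t \<in> ?I" for t using ab by (auto simp: cl_def)
  have clid: "t \<in> ?I \<Longrightarrow> cl t = t" for t by (auto simp: cl_def)
  have ch': "continuous_on UNIV h'"
    unfolding h'_def
    by (rule continuous_on_compose2[OF ch]) (use ab in \<open>auto simp: cl_def clI intro!: continuous_intros\<close>)
  define J where "J = {\<alpha> - 1..\<beta> + 1}"
  define U where "U = {\<alpha> - 1<..<\<beta> + 1}"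
  define \<phi> where "\<phi> = (\<lambda>t. integral {\<alpha> - 1..t} h' - integral {\<alpha> - 1..\<alpha>} h')"
  have d\<phi>: "(\<phi> has_real_derivative h' s) (at s)" if s: "s \<in> U" for s
  proof -
    have sJ: "s \<in> J" using s by (auto simp: U_def J_def)
    have "((\<lambda>u. integral {\<alpha> - 1..u} h') has_real_derivative h' s) (at s within J)"
      using integral_has_vector_derivative[OF continuous_on_subset[OF ch' subset_UNIV] sJ[unfolded J_def]]
      by (simp add: has_real_derivative_iff_has_vector_derivative J_def)
    moreover have "s \<in> interior J" using s by (simp add: U_def J_def)
    ultimately have "((\<lambda>u. integral {\<alpha> - 1..u} h') has_real_derivative h' s) (at s)"
      using at_within_interior by metis
    then show ?thesis unfolding \<phi>_def by (rule DERIV_diff[OF _ DERIV_const, simplified])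
  qed
  have \<phi>\<alpha>: "\<phi> \<alpha> = 0" by (simp add: \<phi>_def)
  have ih': "integral ?I h' = 0"
  proof -
    have "integral ?I h' = integral ?I h" by (rule integral_cong) (simp add: h'_def clid)
    then show ?thesis using ih0 by simp
  qed
  have \<phi>\<beta>: "\<phi> \<beta> = 0"
  proof -
    have "integral {\<alpha> - 1..\<alpha>} h' + integral {\<alpha>..\<beta>} h' = integral {\<alpha> - 1..\<beta>} h'"
      by (rule Henstock_Kurzweil_Integration.integral_combine) (use ab in \<open>auto intro!: integrable_continuous_interval continuous_on_subset[OF ch']\<close>)
    then show ?thesis using ih' by (simp add: \<phi>_def)
  qed
  have "open U" "?I \<subseteq> U" by (auto simp: U_def)
  moreover have "\<forall>t\<in>U. (\<phi> has_real_derivative h' t) (at t)" using d\<phi> by blast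
  moreover have "continuous_on U h'" by (rule continuous_on_subset[OF ch' subset_UNIV])
  ultimately have H1: "integral ?I (\<lambda>t. \<phi> t * a t + h' t * b t) = 0"
    using H \<phi>\<alpha> \<phi>\<beta> by blast
  have d\<phi>I: "(\<phi> has_real_derivative h' s) (at s within ?I)" if "s \<in> ?I" for s
    using d\<phi>[of s] that ab by (auto simp: U_def intro: has_field_derivative_at_within)
  have c\<phi>: "continuous_on ?I \<phi>" by (rule deriv_within_cont[OF d\<phi>I])
  have ch'I: "continuous_on ?I h'" using continuous_on_subset[OF ch'] by blast
  have ibp: "integral ?I (\<lambda>t. \<phi> t * a t) = - integral ?I (\<lambda>t. h' t * Aa t)"
    unfolding Aa_def by (rule ibp_zero[OF ab ca d\<phi>I ch'I \<phi>\<alpha> \<phi>\<beta>])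
  have "integral ?I (\<lambda>t. \<phi> t * a t + h' t * b t) = integral ?I (\<lambda>t. \<phi> t * a t) + integral ?I (\<lambda>t. h' t * b t)"
    by (intro integral_add integrable_continuous_interval continuous_intros ca cb c\<phi> ch'I)
  with H1 ibp have H2: "integral ?I (\<lambda>t. h' t * b t) - integral ?I (\<lambda>t. h' t * Aa t) = 0" by simp
  have "integral ?I (\<lambda>t. h t * h t) = integral ?I (\<lambda>t. h' t * b t - h' t * Aa t - c * h' t)"
    by (rule integral_cong) (simp add: h'_def clid h_def algebra_simps)
  also have "\<dots> = integral ?I (\<lambda>t. h' t * b t) - integral ?I (\<lambda>t. h' t * Aa t) - integral ?I (\<lambda>t. c * h' t)"
  proof -
    have i1: "integral ?I (\<lambda>t. h' t * b t - h' t * Aa t - c * h' t)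
        = integral ?I (\<lambda>t. h' t * b t - h' t * Aa t) - integral ?I (\<lambda>t. c * h' t)"
      by (intro integral_diff integrable_continuous_interval continuous_intros ca cb cA ch'I)
    have i2: "integral ?I (\<lambda>t. h' t * b t - h' t * Aa t)
        = integral ?I (\<lambda>t. h' t * b t) - integral ?I (\<lambda>t. h' t * Aa t)"
      by (intro integral_diff integrable_continuous_interval continuous_intros ca cb cA ch'I)
    show ?thesis using i1 i2 by simp
  qed
  also have "\<dots> = 0" using H2 ih' by (simp add: integral_mult_right)
  finally have "integral ?I (\<lambda>t. h t * h t) = 0" .
  moreover have "continuous_on ?I (\<lambda>t. h t * h t)" by (intro continuous_intros ch)
  ultimately have h0: "\<forall>s\<in>?I. h s * h s = 0"
    using integral_eq_0_iff[of \<alpha> \<beta> "\<lambda>t. h t * h t"] ab by simp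
  have beq: "\<And>s. s \<in> ?I \<Longrightarrow> Aa s + c = b s" using h0 by (fastforce simp: h_def)
  have "((\<lambda>s. Aa s + c) has_real_derivative a t) (at t within ?I)"
    using DERIV_add[OF dA[OF t] DERIV_const[of c]] by simp
  then show ?thesis
    by (rule has_field_derivative_transform_within[of _ _ _ _ 1]) (use t beq in simp_all)
qed

lemma tvs_open_translate:
  fixes S :: "'e::{real_vector,t2_space} set"
  assumes "tvs TYPE('e)" "open S"
  shows "open {u. c + u \<in> S}"
proof -
  have "continuous_on UNIV (\<lambda>u::'e. c + u)"
    unfolding continuous_on_def by (intro ballI tvs_tendsto_add[OF assms(1)] tendsto_const tendsto_ident_at)
  from open_vimage[OF assms(2) this] show ?thesis by (simp add: vimage_def)
qed

lemma tvs_open_scale: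
  fixes S :: "'e::{real_vector,t2_space} set"
  assumes "tvs TYPE('e)" "open S"
  shows "open {u. c *\<^sub>R u \<in> S}"
proof -
  have "continuous_on UNIV (\<lambda>u::'e. c *\<^sub>R u)"
    unfolding continuous_on_def by (intro ballI tvs_tendsto_scaleR[OF assms(1)] tendsto_const tendsto_ident_at)
  from open_vimage[OF assms(2) this] show ?thesis by (simp add: vimage_def)
qed

lemma tvs_add_nbhd:
  fixes S :: "'e::{real_vector,t2_space} set"
  assumes tvs: "tvs TYPE('e)" and S: "open S" "0 \<in> S"
  obtains V where "open V" "0 \<in> V" "\<And>a b. a \<in> V \<Longrightarrow> b \<in> V \<Longrightarrow> a + b \<in> S"
proof -
  have c: "continuous_on UNIV (\<lambda>(x::'e, y::'e). x + y)" using tvs unfolding tvs_def by blast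
  have "open ((\<lambda>(x::'e, y::'e). x + y) -` S)" by (rule open_vimage[OF S(1) c])
  moreover have "(0::'e, 0::'e) \<in> (\<lambda>(x::'e, y::'e). x + y) -` S" using S(2) by simp
  ultimately obtain A B where AB: "open A" "open B" "(0,0) \<in> A \<times> B" "A \<times> B \<subseteq> (\<lambda>(x::'e, y::'e). x + y) -` S"
    by (rule open_prod_elim)
  show ?thesis
  proof (rule that[of "A \<inter> B"])
    show "open (A \<inter> B)" using AB by auto
    show "0 \<in> A \<inter> B" using AB by auto
    fix a b assume "a \<in> A \<inter> B" "b \<in> A \<inter> B"
    then have "(a, b) \<in> A \<times> B" by auto
    then show "a + b \<in> S" using AB(4) by auto
  qed
qed

lemma tvs_diff_nbhd:
  fixes S :: "'e::{real_vector,t2_space} set"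
  assumes tvs: "tvs TYPE('e)" and S: "open S" "0 \<in> S"
  obtains V where "open V" "0 \<in> V" "\<And>a b. a \<in> V \<Longrightarrow> b \<in> V \<Longrightarrow> a - b \<in> S"
proof -
  obtain V where V: "open V" "0 \<in> V" "\<And>a b. a \<in> V \<Longrightarrow> b \<in> V \<Longrightarrow> a + b \<in> S"
    using tvs_add_nbhd[OF assms] by blast
  define V' where "V' = V \<inter> {u. (-1) *\<^sub>R u \<in> V}"
  show ?thesis
  proof (rule that[of V'])
    have "open {u. (-1) *\<^sub>R u \<in> V}" by (rule tvs_open_scale[OF tvs V(1)])
    then show "open V'" unfolding V'_def using V(1) by (intro open_Int) auto
    show "0 \<in> V'" using V(2) by (simp add: V'_def)
    fix a b assume "a \<in> V'" "b \<in> V'"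
    then have "a \<in> V" "(-1) *\<^sub>R b \<in> V" by (auto simp: V'_def)
    from V(3)[OF this] show "a - b \<in> S" by simp
  qed
qed

lemma tvs_regular:
  fixes S :: "'e::{real_vector,t2_space} set"
  assumes tvs: "tvs TYPE('e)" and S: "open S" "0 \<in> S"
  obtains V where "open V" "0 \<in> V" "closure V \<subseteq> S"
proof -
  obtain V where V: "open V" "0 \<in> V" "\<And>a b. a \<in> V \<Longrightarrow> b \<in> V \<Longrightarrow> a + b \<in> S"
    using tvs_add_nbhd[OF assms] by blast
  have "x \<in> S" if x: "x \<in> closure V" for x
  proof -
    define N where "N = {u. (-1) *\<^sub>R u \<in> {w. x + w \<in> V}}"
    have oN: "open N" unfolding N_def by (rule tvs_open_scale[OF tvs tvs_open_translate[OF tvs V(1)]])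
    have xN: "x \<in> N" using V(2) by (simp add: N_def)
    obtain u where "u \<in> V" "u \<in> N" using x oN xN unfolding closure_iff_nhds_not_empty by blast
    then have "u \<in> V" "x - u \<in> V" by (auto simp: N_def)
    from V(3)[OF this] show "x \<in> S" by simp
  qed
  then show ?thesis using that V(1,2) by blast
qed

lemma tvs_unif_cont:
  fixes \<zeta> :: "real \<Rightarrow> 'e::{real_vector,t2_space}"
  assumes tvs: "tvs TYPE('e)" and K: "compact K" and c: "continuous_on K \<zeta>"
    and U: "open U" "0 \<in> U"
  obtains \<delta> where "\<delta> > 0" "\<And>s s'. s \<in> K \<Longrightarrow> s' \<in> K \<Longrightarrow> \<bar>s - s'\<bar> < \<delta> \<Longrightarrow> \<zeta> s - \<zeta> s' \<in> U"
proof -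
  obtain W where W: "open W" "0 \<in> W" "\<And>a b. a \<in> W \<Longrightarrow> b \<in> W \<Longrightarrow> a - b \<in> U"
    using tvs_diff_nbhd[OF tvs U] by blast
  define \<G> where "\<G> = {G. open G \<and> (\<exists>c\<in>K. \<forall>s'\<in>K. s' \<in> G \<longrightarrow> \<zeta> s' - \<zeta> c \<in> W)}"
  have cov: "K \<subseteq> \<Union>\<G>"
  proof
    fix c assume cK: "c \<in> K"
    have "open {u. (-1) *\<^sub>R \<zeta> c + u \<in> W}" by (rule tvs_open_translate[OF tvs W(1)])
    moreover have "\<zeta> c \<in> {u. (-1) *\<^sub>R \<zeta> c + u \<in> W}" using W(2) by simp
    ultimately obtain A where A: "open A" "c \<in> A" "\<forall>y\<in>K. y \<in> A \<longrightarrow> \<zeta> y \<in> {u. (-1) *\<^sub>R \<zeta> c + u \<in> W}"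
      using c cK unfolding continuous_on_topological by metis
    then have "A \<in> \<G>" unfolding \<G>_def using cK by (auto simp: algebra_simps)
    then show "c \<in> \<Union>\<G>" using A(2) by blast
  qed
  obtain e where e: "e > 0" "\<And>x. x \<in> K \<Longrightarrow> \<exists>G\<in>\<G>. ball x e \<subseteq> G"
    using Heine_Borel_lemma[OF K cov] \<G>_def by blast
  show ?thesis
  proof (rule that[OF e(1)])
    fix s s' assume s: "s \<in> K" and s': "s' \<in> K" and d: "\<bar>s - s'\<bar> < e"
    obtain G where G: "G \<in> \<G>" "ball s e \<subseteq> G" using e(2)[OF s] by blast
    obtain c where cc: "c \<in> K" "\<forall>s'\<in>K. s' \<in> G \<longrightarrow> \<zeta> s' - \<zeta> c \<in> W" using G(1) unfolding \<G>_def by blast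
    have "s \<in> G" "s' \<in> G" using G(2) e(1) d by (auto simp: dist_real_def)
    then have "\<zeta> s - \<zeta> c \<in> W" "\<zeta> s' - \<zeta> c \<in> W" using cc s s' by auto
    from W(3)[OF this] show "\<zeta> s - \<zeta> s' \<in> U" by simp
  qed
qed

lemma convex_avg:
  fixes u :: "nat \<Rightarrow> 'e::real_vector"
  assumes "convex C" "N > 0" "\<And>k. k < N \<Longrightarrow> u k \<in> C"
  shows "(\<Sum>k<N. (1 / real N) *\<^sub>R u k) \<in> C"
  by (rule convex_sum[OF finite_lessThan assms(1)]) (use assms in auto)

lemma sum_group_div:
  fixes f :: "nat \<Rightarrow> 'e::real_vector"
  assumes q: "q > 0"
  shows "(\<Sum>k<p * q. f (k div q)) = real q *\<^sub>R (\<Sum>j<p. f j)"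
proof (induction p)
  case 0 then show ?case by simp
next
  case (Suc p)
  have e: "(\<Sum>k\<in>{0..<p*q+q}. f (k div q)) = (\<Sum>k\<in>{0..<p*q}. f (k div q)) + (\<Sum>k\<in>{p*q..<p*q+q}. f (k div q))"
    by (rule sum.atLeastLessThan_concat[symmetric]) auto
  have "(\<Sum>k<Suc p * q. f (k div q)) = (\<Sum>k\<in>{0..<p*q}. f (k div q)) + (\<Sum>k\<in>{p*q..<p*q+q}. f (k div q))"
    using e by (simp add: atLeast0LessThan add.commute)
  also have "(\<Sum>k\<in>{p*q..<p*q+q}. f (k div q)) = (\<Sum>k\<in>{p*q..<p*q+q}. f p)"
  proof (rule sum.cong[OF refl])
    fix k assume "k \<in> {p*q..<p*q+q}"
    then have "k div q = p" using q by (auto simp: div_nat_eqI mult.commute)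
    then show "f (k div q) = f p" by simp
  qed
  also have "\<dots> = real q *\<^sub>R f p" by (simp add: sum_constant_scaleR)
  finally show ?case using Suc by (simp add: atLeast0LessThan scaleR_add_right)
qed

definition rsum :: "(real \<Rightarrow> 'e::real_vector) \<Rightarrow> real \<Rightarrow> real \<Rightarrow> nat \<Rightarrow> 'e" where
  "rsum \<zeta> a h n = (\<Sum>k<2^n. (h / 2^n) *\<^sub>R \<zeta> (a + real k * h / 2^n))"

lemma rsum_regroup:
  assumes "n \<le> m"
  shows "rsum \<zeta> a h n = (\<Sum>k<2^m. (h / 2^m) *\<^sub>R \<zeta> (a + real (k div 2^(m-n)) * h / 2^n))"
proof -
  define q :: nat where "q = 2^(m-n)"
  have q: "q > 0" by (simp add: q_def)
  have m: "(2::nat)^m = 2^n * q" using assms by (simp add: q_def power_add[symmetric])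
  have mr: "(2::real)^m = 2^n * real q" using assms by (simp add: q_def power_add[symmetric])
  have "(\<Sum>k<2^m. (h / 2^m) *\<^sub>R \<zeta> (a + real (k div q) * h / 2^n))
      = real q *\<^sub>R (\<Sum>j<2^n. (h / 2^m) *\<^sub>R \<zeta> (a + real j * h / 2^n))"
    unfolding m by (rule sum_group_div[OF q, of "\<lambda>j. (h / 2^m) *\<^sub>R \<zeta> (a + real j * h / 2^n)" "2^n"])
  also have "\<dots> = rsum \<zeta> a h n"
    unfolding rsum_def scaleR_sum_right using q by (intro sum.cong refl) (simp add: mr)
  finally show ?thesis by (simp add: q_def)
qed

lemma rsum_diff_bound:
  fixes a h :: real and m n k :: nat
  assumes "n \<le> m" "k < 2^m" "h > 0"
  defines "c \<equiv> a + real (k div 2^(m-n)) * h / 2^n" and "f \<equiv> a + real k * h / 2^m"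
  shows "c \<in> {a..a+h}" "f \<in> {a..a+h}" "\<bar>c - f\<bar> < h / 2^n"
proof -
  define q :: nat where "q = 2^(m-n)"
  have q: "q > 0" by (simp add: q_def)
  have m: "(2::nat)^m = 2^n * q" using assms by (simp add: q_def power_add[symmetric])
  have mr: "(2::real)^m = 2^n * real q" using assms by (simp add: q_def power_add[symmetric])
  have kd: "k div q < 2^n" using assms(2) m q by (simp add: div_less_iff_less_mult)
  have kdr: "real (k div q) \<le> 2^n" using kd by (metis of_nat_le_iff of_nat_numeral of_nat_power less_imp_le)
  have kr: "real k \<le> 2^m" using assms(2) by (metis of_nat_le_iff of_nat_numeral of_nat_power less_imp_le)
  have "c \<ge> a" unfolding c_def using assms(3) by simp
  moreover have "c \<le> a + h"
  proof -
    have "real (k div q) * h / 2^n \<le> 2^n * h / 2^n"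
      using kdr assms(3) by (intro divide_right_mono mult_right_mono) auto
    then show ?thesis by (simp add: c_def q_def)
  qed
  ultimately show "c \<in> {a..a+h}" by simp
  have "f \<ge> a" unfolding f_def using assms(3) by simp
  moreover have "f \<le> a + h"
  proof -
    have "real k * h / 2^m \<le> 2^m * h / 2^m"
      using kr assms(3) by (intro divide_right_mono mult_right_mono) auto
    then show ?thesis by (simp add: f_def)
  qed
  ultimately show "f \<in> {a..a+h}" by simp
  have kk: "k = q * (k div q) + k mod q" by simp
  have "f - c = h / 2^m * real (k mod q)"
  proof -
    have "real k = real q * real (k div q) + real (k mod q)"
      by (metis kk of_nat_add of_nat_mult)
    then show ?thesis unfolding f_def c_def q_def[symmetric] using mr q by (simp add: field_simps)
  qed
  note fc = this
  have pos: "0 < h / 2^m" using assms(3) by simp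
  have lt: "h / 2^m * real (k mod q) < h / 2^m * real q"
    by (rule mult_strict_left_mono[OF _ pos]) (use q in simp)
  have "\<bar>c - f\<bar> = \<bar>f - c\<bar>" by simp
  also have "\<dots> = h / 2^m * real (k mod q)" using fc pos assms(3) by simp
  finally have "\<bar>c - f\<bar> < h / 2^m * real q" using lt by simp
  also have "\<dots> = h / 2^n" using mr q by simp
  finally show "\<bar>c - f\<bar> < h / 2^n" .
qed


lemma rsum_diff_avg:
  fixes \<zeta> :: "real \<Rightarrow> 'e::real_vector"
  assumes "n \<le> m"
  shows "rsum \<zeta> a h n - rsum \<zeta> a h m = h *\<^sub>R (\<Sum>k<2^m. (1 / real (2^m)) *\<^sub>R
      (\<zeta> (a + real (k div 2^(m-n)) * h / 2^n) - \<zeta> (a + real k * h / 2^m)))"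
proof -
  have "rsum \<zeta> a h n - rsum \<zeta> a h m = (\<Sum>k<2^m. (h / 2^m) *\<^sub>R
      (\<zeta> (a + real (k div 2^(m-n)) * h / 2^n) - \<zeta> (a + real k * h / 2^m)))"
    unfolding rsum_regroup[OF assms] by (simp add: rsum_def scaleR_diff_right sum_subtractf)
  also have "\<dots> = h *\<^sub>R (\<Sum>k<2^m. (1 / real (2^m)) *\<^sub>R
      (\<zeta> (a + real (k div 2^(m-n)) * h / 2^n) - \<zeta> (a + real k * h / 2^m)))"
    by (simp add: scaleR_sum_right)
  finally show ?thesis .
qed

lemma rsum_conv:
  fixes \<zeta> :: "real \<Rightarrow> 'v::{real_vector,t2_space}"
  assumes lcs: "lcs TYPE('v)" and h: "h > 0" and c: "continuous_on {a..a+h} \<zeta>"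
  shows "\<exists>J. rsum \<zeta> a h \<longlonglongrightarrow> J"
proof -
  have tvs: "tvs TYPE('v)" by (rule lcs_tvs[OF lcs])
  have comp: "\<And>X::nat \<Rightarrow> 'v. (\<forall>U. open U \<and> 0 \<in> U \<longrightarrow> (\<exists>N. \<forall>m\<ge>N. \<forall>n\<ge>N. X m - X n \<in> U))
        \<Longrightarrow> (\<exists>l. X \<longlonglongrightarrow> l)"
    using lcs unfolding lcs_def by blast
  have lconv: "\<And>U::'v set. open U \<Longrightarrow> 0 \<in> U \<Longrightarrow> \<exists>C. open C \<and> convex C \<and> 0 \<in> C \<and> C \<subseteq> U"
    using lcs unfolding lcs_def by blast
  show ?thesis
  proof (rule comp, intro allI impI, elim conjE)
    fix U :: "'v set" assume U: "open U" "0 \<in> U"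
    define U' where "U' = {u. h *\<^sub>R u \<in> U} \<inter> {u. (-h) *\<^sub>R u \<in> U}"
    have "open U'" unfolding U'_def
      using tvs_open_scale[OF tvs U(1), of h] tvs_open_scale[OF tvs U(1), of "-h"] by auto
    moreover have "0 \<in> U'" using U(2) by (simp add: U'_def)
    ultimately obtain C where C: "open C" "convex C" "0 \<in> C" "C \<subseteq> U'" using lconv by blast
    obtain \<delta> where \<delta>: "\<delta> > 0" "\<And>s s'. s \<in> {a..a+h} \<Longrightarrow> s' \<in> {a..a+h} \<Longrightarrow> \<bar>s - s'\<bar> < \<delta> \<Longrightarrow> \<zeta> s - \<zeta> s' \<in> C"
      using tvs_unif_cont[OF tvs compact_Icc c C(1,3)] by blast
    obtain N where N: "(1/2::real)^N < \<delta> / h" using real_arch_pow_inv[of "\<delta>/h" "1/2"] \<delta> h by auto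
    have hN: "h / 2^N < \<delta>" using N h by (simp add: field_simps power_one_over)
    have key: "\<exists>u\<in>C. rsum \<zeta> a h n - rsum \<zeta> a h m = h *\<^sub>R u" if nm: "n \<le> m" "N \<le> n" for n m
    proof -
      have "(\<Sum>k<2^m. (1 / real (2^m)) *\<^sub>R
          (\<zeta> (a + real (k div 2^(m-n)) * h / 2^n) - \<zeta> (a + real k * h / 2^m))) \<in> C"
      proof (rule convex_avg[OF C(2)])
        show "0 < (2::nat)^m" by simp
        fix k :: nat assume k: "k < 2^m"
        note b = rsum_diff_bound[OF nm(1) k h, of a]
        have "h / 2^n \<le> h / 2^N"
          using nm(2) h by (intro divide_left_mono) (auto intro: power_increasing)
        then show "\<zeta> (a + real (k div 2^(m-n)) * h / 2^n) - \<zeta> (a + real k * h / 2^m) \<in> C"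
          using b hN by (intro \<delta>(2)) auto
      qed
      then show ?thesis unfolding rsum_diff_avg[OF nm(1)] by blast
    qed
    show "\<exists>N. \<forall>m\<ge>N. \<forall>n\<ge>N. rsum \<zeta> a h m - rsum \<zeta> a h n \<in> U"
    proof (intro exI[of _ N] allI impI)
      fix m n assume m: "N \<le> m" and n: "N \<le> n"
      show "rsum \<zeta> a h m - rsum \<zeta> a h n \<in> U"
      proof (cases "m \<le> n")
        case True
        then obtain u where "u \<in> C" "rsum \<zeta> a h m - rsum \<zeta> a h n = h *\<^sub>R u" using key[of m n] m by blast
        then show ?thesis using C(4) by (auto simp: U'_def)
      next
        case False
        then obtain u where u: "u \<in> C" "rsum \<zeta> a h n - rsum \<zeta> a h m = h *\<^sub>R u" using key[of n m] n by force
        then have "rsum \<zeta> a h m - rsum \<zeta> a h n = (-h) *\<^sub>R u" by (simp add: algebra_simps)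
        then show ?thesis using u(1) C(4) by (auto simp: U'_def)
      qed
    qed
  qed
qed

lemma mvt_within_I:
  fixes f f' :: "real \<Rightarrow> real"
  assumes ab: "\<alpha> < \<beta>" and d: "\<And>t. t \<in> {\<alpha>..\<beta>} \<Longrightarrow> (f has_real_derivative f' t) (at t within {\<alpha>..\<beta>})"
    and uv: "\<alpha> \<le> u" "u < v" "v \<le> \<beta>"
  shows "\<exists>\<theta>. u < \<theta> \<and> \<theta> < v \<and> f v - f u = (v - u) * f' \<theta>"
proof -
  have cI: "continuous_on {\<alpha>..\<beta>} f" by (rule deriv_within_cont[OF d])
  have c: "continuous_on {u..v} f" by (rule continuous_on_subset[OF cI]) (use uv in auto)
  have dat: "(f has_real_derivative f' x) (at x)" if "u < x" "x < v" for x
  proof -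
    have "\<alpha> < x" "x < \<beta>" using that uv by auto
    then show ?thesis using d[of x] at_within_Icc_at[of \<alpha> x \<beta>] by auto
  qed
  obtain l \<theta> where th: "u < \<theta>" "\<theta> < v" "(f has_real_derivative l) (at \<theta>)" "f v - f u = (v - u) * l"
    using MVT[OF uv(2) c] dat by (metis real_differentiable_def)
  have "l = f' \<theta>" using DERIV_unique[OF th(3) dat[OF th(1,2)]] .
  then show ?thesis using th by blast
qed

lemma rsum_weak:
  fixes z \<zeta> :: "real \<Rightarrow> 'v::{real_vector,t2_space}" and l :: "'v \<Rightarrow> real"
  assumes ab: "\<alpha> < \<beta>" and sub: "{a..a+h} \<subseteq> {\<alpha>..\<beta>}" and h: "h > 0"
    and lin: "linear l" and cl: "continuous_on UNIV l"
    and dz: "\<And>t. t \<in> {\<alpha>..\<beta>} \<Longrightarrow> ((\<lambda>s. l (z s)) has_real_derivative l (\<zeta> t)) (at t within {\<alpha>..\<beta>})"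
    and c\<zeta>: "continuous_on {\<alpha>..\<beta>} \<zeta>"
    and conv: "rsum \<zeta> a h \<longlonglongrightarrow> J"
  shows "l J = l (z (a + h)) - l (z a)"
proof -
  have lim1: "(\<lambda>n. l (rsum \<zeta> a h n)) \<longlonglongrightarrow> l J"
    by (rule continuous_on_tendsto_compose[OF cl conv]) auto
  have lr: "l (rsum \<zeta> a h n) = (\<Sum>k<2^n. (h / 2^n) * l (\<zeta> (a + real k * h / 2^n)))" for n
    unfolding rsum_def linear_sum[OF lin] linear_scale[OF lin] by simp
  define F where "F = (\<lambda>s. l (z s))"
  have ucl: "uniformly_continuous_on {a..a+h} (\<lambda>s. l (\<zeta> s))"
  proof (rule compact_uniformly_continuous[OF _ compact_Icc])
    show "continuous_on {a..a+h} (\<lambda>s. l (\<zeta> s))"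
      by (rule continuous_on_compose2[OF cl continuous_on_subset[OF c\<zeta> sub]]) auto
  qed
  have lim2: "(\<lambda>n. l (rsum \<zeta> a h n)) \<longlonglongrightarrow> F (a + h) - F a"
  proof (rule LIMSEQ_I)
    fix e :: real assume e: "e > 0"
    obtain d where d: "d > 0" "\<And>x x'. x \<in> {a..a+h} \<Longrightarrow> x' \<in> {a..a+h} \<Longrightarrow> dist x' x < d \<Longrightarrow>
        dist (l (\<zeta> x')) (l (\<zeta> x)) < e / (2 * h)"
      using ucl e h unfolding uniformly_continuous_on_def by (metis divide_pos_pos mult_pos_pos zero_less_numeral)
    obtain N where N: "(1/2::real)^N < d / h" using real_arch_pow_inv[of "d/h" "1/2"] d h by auto
    show "\<exists>no. \<forall>n\<ge>no. norm (l (rsum \<zeta> a h n) - (F (a + h) - F a)) < e"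
    proof (intro exI[of _ N] allI impI)
      fix n assume n: "N \<le> n"
      define M :: nat where "M = 2^n"
      define s where "s = (\<lambda>k::nat. a + real k * h / 2^n)"
      have M: "real M = 2^n" by (simp add: M_def)
      have hM: "h / 2^n < d"
      proof -
        have "h / 2^n \<le> h / 2^N" using n h by (intro divide_left_mono) (auto intro: power_increasing)
        also have "\<dots> < d" using N h by (simp add: field_simps power_one_over)
        finally show ?thesis .
      qed
      have sI: "s k \<in> {a..a+h}" if "k \<le> M" for k
      proof -
        have "real k \<le> 2^n" using that M by (metis of_nat_le_iff)
        then have "real k * h / 2^n \<le> 2^n * h / 2^n" using h by (intro divide_right_mono mult_right_mono) auto
        then show ?thesis using h by (simp add: s_def)
      qed
      have ss: "s (Suc k) - s k = h / 2^n" for k by (simp add: s_def field_simps)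
      have ex: "\<forall>k\<in>{..<M}. \<exists>\<theta>. s k < \<theta> \<and> \<theta> < s (Suc k) \<and> F (s (Suc k)) - F (s k) = (h / 2^n) * l (\<zeta> \<theta>)"
      proof
        fix k assume k: "k \<in> {..<M}"
        have "s k \<in> {a..a+h}" "s (Suc k) \<in> {a..a+h}" using k sI by auto
        then have "\<alpha> \<le> s k" "s (Suc k) \<le> \<beta>" using sub by auto
        moreover have "s k < s (Suc k)" using ss[of k] h by (simp add: algebra_simps)
        ultimately show "\<exists>\<theta>. s k < \<theta> \<and> \<theta> < s (Suc k) \<and> F (s (Suc k)) - F (s k) = (h / 2^n) * l (\<zeta> \<theta>)"
          using mvt_within_I[OF ab dz, of "s k" "s (Suc k)"] ss[of k] unfolding F_def by metis
      qed
      then obtain \<theta> where th: "\<forall>k\<in>{..<M}. s k < \<theta> k \<and> \<theta> k < s (Suc k) \<and> F (s (Suc k)) - F (s k) = (h / 2^n) * l (\<zeta> (\<theta> k))"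
        by (rule bchoice[THEN exE]) blast
      have tel: "F (a + h) - F a = (\<Sum>k<M. F (s (Suc k)) - F (s k))"
      proof -
        have "(\<Sum>k<M. F (s (Suc k)) - F (s k)) = F (s M) - F (s 0)"
          by (rule sum_lessThan_telescope)
        moreover have "s M = a + h" "s 0 = a" using M by (simp_all add: s_def)
        ultimately show ?thesis by simp
      qed
      also have "\<dots> = (\<Sum>k<M. (h / 2^n) * l (\<zeta> (\<theta> k)))" using th by (intro sum.cong) auto
      finally have tel': "F (a + h) - F a = (\<Sum>k<M. (h / 2^n) * l (\<zeta> (\<theta> k)))" .
      have "l (rsum \<zeta> a h n) - (F (a + h) - F a) = (\<Sum>k<M. (h / 2^n) * (l (\<zeta> (s k)) - l (\<zeta> (\<theta> k))))"
        unfolding lr tel' by (simp add: M_def s_def sum_subtractf[symmetric] algebra_simps)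
      also have "\<bar>\<dots>\<bar> \<le> (\<Sum>k<M. (h / 2^n) * (e / (2 * h)))"
      proof -
        have "\<bar>\<Sum>k<M. (h / 2^n) * (l (\<zeta> (s k)) - l (\<zeta> (\<theta> k)))\<bar> \<le> (\<Sum>k<M. \<bar>(h / 2^n) * (l (\<zeta> (s k)) - l (\<zeta> (\<theta> k)))\<bar>)"
          by (rule sum_abs)
        also have "\<dots> \<le> (\<Sum>k<M. (h / 2^n) * (e / (2 * h)))"
        proof (rule sum_mono)
          fix k assume k: "k \<in> {..<M}"
          have sk: "s k \<in> {a..a+h}" using sI k by auto
          have sk1: "s (Suc k) \<in> {a..a+h}" using sI k by auto
          have thk: "s k < \<theta> k" "\<theta> k < s (Suc k)" using th k by auto
          have tk: "\<theta> k \<in> {a..a+h}" using sk sk1 thk by auto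
          have "dist (\<theta> k) (s k) < d" using thk ss[of k] hM by (simp add: dist_real_def)
          then have "dist (l (\<zeta> (\<theta> k))) (l (\<zeta> (s k))) < e / (2 * h)" using d(2)[OF sk tk] by blast
          then have "\<bar>l (\<zeta> (s k)) - l (\<zeta> (\<theta> k))\<bar> \<le> e / (2 * h)" by (simp add: dist_real_def abs_minus_commute)
          then have "(h / 2^n) * \<bar>l (\<zeta> (s k)) - l (\<zeta> (\<theta> k))\<bar> \<le> (h / 2^n) * (e / (2 * h))"
            by (rule mult_left_mono) (use h in simp)
          moreover have "\<bar>(h / 2^n) * (l (\<zeta> (s k)) - l (\<zeta> (\<theta> k)))\<bar> = (h / 2^n) * \<bar>l (\<zeta> (s k)) - l (\<zeta> (\<theta> k))\<bar>"
            using h by (simp add: abs_mult)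
          ultimately show "\<bar>(h / 2^n) * (l (\<zeta> (s k)) - l (\<zeta> (\<theta> k)))\<bar> \<le> (h / 2^n) * (e / (2 * h))"
            by simp
        qed
        finally show ?thesis .
      qed
      also have "\<dots> = e / 2" using M h by simp
      finally show "norm (l (rsum \<zeta> a h n) - (F (a + h) - F a)) < e" using e by simp
    qed
  qed
  from tendsto_unique[OF _ lim1 lim2] show ?thesis by (simp add: F_def)
qed

lemma weak_to_strong:
  fixes z \<zeta> :: "real \<Rightarrow> 'v::{real_vector,t2_space}"
  assumes lcs: "lcs TYPE('v)" and ab: "\<alpha> < \<beta>" and c\<zeta>: "continuous_on {\<alpha>..\<beta>} \<zeta>"
    and L: "\<And>l. l \<in> L \<Longrightarrow> linear l \<and> continuous_on UNIV l"
    and sep: "\<And>u. (\<forall>l\<in>L. l u = 0) \<Longrightarrow> u = 0"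
    and dz: "\<And>l t. l \<in> L \<Longrightarrow> t \<in> {\<alpha>..\<beta>} \<Longrightarrow>
       ((\<lambda>s. l (z s)) has_real_derivative l (\<zeta> t)) (at t within {\<alpha>..\<beta>})"
    and t: "t \<in> {\<alpha>..\<beta>}"
  shows "((\<lambda>s. (1 / (s - t)) *\<^sub>R (z s - z t)) \<longlongrightarrow> \<zeta> t) (at t within {\<alpha>..\<beta>})"
proof (rule topological_tendstoI)
  let ?I = "{\<alpha>..\<beta>}"
  have tvs: "tvs TYPE('v)" by (rule lcs_tvs[OF lcs])
  have lconv: "\<And>U::'v set. open U \<Longrightarrow> 0 \<in> U \<Longrightarrow> \<exists>C. open C \<and> convex C \<and> 0 \<in> C \<and> C \<subseteq> U"
    using lcs unfolding lcs_def by blast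
  fix S assume S: "open S" "\<zeta> t \<in> S"
  define S' where "S' = {u. \<zeta> t + u \<in> S}"
  have oS': "open S'" unfolding S'_def by (rule tvs_open_translate[OF tvs S(1)])
  have S'0: "0 \<in> S'" using S(2) by (simp add: S'_def)
  obtain V where V: "open V" "0 \<in> V" "closure V \<subseteq> S'" using tvs_regular[OF tvs oS' S'0] by blast
  obtain C where C: "open C" "convex C" "0 \<in> C" "C \<subseteq> V" using lconv[OF V(1,2)] by blast
  have oB: "open {u. - \<zeta> t + u \<in> C}" by (rule tvs_open_translate[OF tvs C(1)])
  have "\<zeta> t \<in> {u. - \<zeta> t + u \<in> C}" using C(3) by simp
  then obtain A where A: "open A" "t \<in> A" "\<forall>y\<in>?I. y \<in> A \<longrightarrow> \<zeta> y \<in> {u. - \<zeta> t + u \<in> C}"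
    using c\<zeta> t oB unfolding continuous_on_topological by metis
  obtain r where r: "r > 0" "ball t r \<subseteq> A" using A(1,2) open_contains_ball by blast
  have \<zeta>C: "\<zeta> y - \<zeta> t \<in> C" if "y \<in> ?I" "dist y t < r" for y
    using A(3) r(2) that by (auto simp: dist_commute algebra_simps)
  show "\<forall>\<^sub>F s in at t within ?I. (1 / (s - t)) *\<^sub>R (z s - z t) \<in> S"
    unfolding eventually_at
  proof (intro exI[of _ r] conjI ballI impI)
    show "0 < r" by (rule r(1))
  next
    fix s assume sI: "s \<in> ?I" and s: "s \<noteq> t \<and> dist s t < r"
    define a where "a = min s t"
    define h where "h = \<bar>s - t\<bar>"
    have h: "h > 0" using s by (simp add: h_def)
    have ah: "a + h = max s t" by (simp add: a_def h_def)
    have sub: "{a..a+h} \<subseteq> ?I" using sI t ah by (auto simp: a_def)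
    have subr: "dist y t < r" if y: "y \<in> {a..a+h}" for y
    proof -
      have "min s t \<le> y" "y \<le> max s t" using y ah by (auto simp: a_def)
      then show ?thesis using s by (simp add: dist_real_def) linarith
    qed
    obtain J where J: "rsum \<zeta> a h \<longlonglongrightarrow> J"
      using rsum_conv[OF lcs h continuous_on_subset[OF c\<zeta> sub]] by blast
    have "J = z (a + h) - z a"
    proof -
      have "l (J - (z (a + h) - z a)) = 0" if l: "l \<in> L" for l
      proof -
        have "l J = l (z (a + h)) - l (z a)"
          by (rule rsum_weak[OF ab sub h _ _ dz c\<zeta> J]) (use L[OF l] l in auto)
        then show ?thesis using linear_diff[of l] L[OF l] by simp
      qed
      then show ?thesis using sep by fastforce
    qed
    have avg: "(1 / h) *\<^sub>R rsum \<zeta> a h n - \<zeta> t \<in> C" for n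
    proof -
      have "(1 / h) *\<^sub>R rsum \<zeta> a h n = (\<Sum>k<2^n. (1 / real (2^n)) *\<^sub>R \<zeta> (a + real k * h / 2^n))"
        unfolding rsum_def scaleR_sum_right using h by (intro sum.cong refl) simp
      moreover have "(\<Sum>k<(2::nat)^n. (1 / real (2^n)) *\<^sub>R \<zeta> t) = \<zeta> t"
        by (simp add: sum_constant_scaleR)
      ultimately have eq: "(1 / h) *\<^sub>R rsum \<zeta> a h n - \<zeta> t
          = (\<Sum>k<2^n. (1 / real (2^n)) *\<^sub>R (\<zeta> (a + real k * h / 2^n) - \<zeta> t))"
        by (simp add: scaleR_diff_right sum_subtractf)
      have "(\<Sum>k<2^n. (1 / real (2^n)) *\<^sub>R (\<zeta> (a + real k * h / 2^n) - \<zeta> t)) \<in> C"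
      proof (rule convex_avg[OF C(2)])
        show "0 < (2::nat)^n" by simp
        fix k :: nat assume k: "k < 2^n"
        have "a + real k * h / 2^n \<in> {a..a+h}"
        proof -
          have "real k \<le> 2^n" using k by (metis of_nat_le_iff of_nat_numeral of_nat_power less_imp_le)
          then have "real k * h / 2^n \<le> 2^n * h / 2^n" using h by (intro divide_right_mono mult_right_mono) auto
          then show ?thesis using h by simp
        qed
        then show "\<zeta> (a + real k * h / 2^n) - \<zeta> t \<in> C" using \<zeta>C sub subr by blast
      qed
      then show ?thesis using eq by simp
    qed
    have lim: "(\<lambda>n. (1 / h) *\<^sub>R rsum \<zeta> a h n - \<zeta> t) \<longlonglongrightarrow> (1 / h) *\<^sub>R J - \<zeta> t"
      by (intro tvs_tendsto_diff[OF tvs] tvs_tendsto_scaleR[OF tvs] tendsto_const J)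
    have "(1 / h) *\<^sub>R J - \<zeta> t \<in> closure C"
      by (rule Lim_in_closed_set[OF closed_closure _ _ lim]) (use avg closure_subset in \<open>auto intro!: always_eventually\<close>)
    then have inS': "(1 / h) *\<^sub>R J - \<zeta> t \<in> S'" using closure_mono[OF C(4)] V(3) by blast
    have "(1 / (s - t)) *\<^sub>R (z s - z t) = (1 / h) *\<^sub>R J"
    proof (cases "s < t")
      case True
      then have "a = s" "a + h = t" using ah by (auto simp: a_def)
      have e: "1 / (s - t) = - (1 / (t - s))" by (metis minus_diff_eq divide_minus_right)
      have "\<bar>s - t\<bar> = t - s" using True by simp
      then show ?thesis unfolding \<open>J = z (a + h) - z a\<close> h_def using True \<open>a = s\<close> \<open>a + h = t\<close>
        by (simp add: e algebra_simps)
    next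
      case False
      then have "a = t" "a + h = s" using ah s by (auto simp: a_def)
      then show ?thesis unfolding \<open>J = z (a + h) - z a\<close> h_def using False by (simp add: abs_if)
    qed
    then show "(1 / (s - t)) *\<^sub>R (z s - z t) \<in> S" using inS' by (simp add: S'_def)
  qed
qed

definition vd :: "(real \<Rightarrow> 'e::{real_vector,topological_space}) \<Rightarrow> real \<Rightarrow> 'e \<Rightarrow> bool" where
  "vd f t d \<longleftrightarrow> ((\<lambda>s. (1 / (s - t)) *\<^sub>R (f s - f t)) \<longlongrightarrow> d) (at t)"

lemma vd_h:
  assumes "vd f t d"
  shows "((\<lambda>h. (1/h) *\<^sub>R (f (t + h) - f t)) \<longlongrightarrow> d) (at 0)"
proof -
  have "((\<lambda>s. (1 / (s - t)) *\<^sub>R (f s - f t)) \<longlongrightarrow> d) (at t)" using assms by (simp add: vd_def)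
  then have "(\<lambda>h. (1 / ((t + h) - t)) *\<^sub>R (f (t + h) - f t)) \<midarrow>0\<rightarrow> d"
    using LIM_offset_zero_iff[of t "\<lambda>s. (1 / (s - t)) *\<^sub>R (f s - f t)" d] by simp
  then show ?thesis by simp
qed

lemma vd_isCont:
  fixes f :: "real \<Rightarrow> 'e::{real_vector,t2_space}"
  assumes tvs: "tvs TYPE('e)" and "vd f t d"
  shows "isCont f t"
proof -
  have 1: "((\<lambda>h. h *\<^sub>R ((1/h) *\<^sub>R (f (t + h) - f t))) \<longlongrightarrow> 0 *\<^sub>R d) (at 0)"
    by (rule tvs_tendsto_scaleR[OF tvs tendsto_ident_at vd_h[OF assms(2)]])
  have "\<forall>\<^sub>F h in at (0::real). h *\<^sub>R ((1/h) *\<^sub>R (f (t + h) - f t)) = f (t + h) - f t"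
    unfolding eventually_at by (intro exI[of _ 1]) auto
  from Lim_transform_eventually[OF 1 this]
  have "((\<lambda>h. f (t + h) - f t) \<longlongrightarrow> 0) (at 0)" by simp
  from tvs_tendsto_add[OF tvs this tendsto_const[of "f t"]]
  have "((\<lambda>h. f (t + h)) \<longlongrightarrow> f t) (at 0)" by simp
  then show "isCont f t" unfolding continuous_at by (rule at0_to_at)
qed

lemma vd_scaled:
  fixes f :: "real \<Rightarrow> 'e::{real_vector,t2_space}"
  assumes tvs: "tvs TYPE('e)" and v: "vd f t d"
  shows "((\<lambda>h. (1/h) *\<^sub>R (f (t + h * c) - f t)) \<longlongrightarrow> c *\<^sub>R d) (at 0)"
proof (cases "c = 0")
  case True then show ?thesis by simp
next
  case False
  have fl: "filterlim (\<lambda>h::real. h * c) (at 0) (at 0)"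
    unfolding filterlim_at
  proof
    show "\<forall>\<^sub>F x in at (0::real). x * c \<in> UNIV \<and> x * c \<noteq> 0"
      unfolding eventually_at using False by (intro exI[of _ 1]) auto
    show "((\<lambda>h::real. h * c) \<longlongrightarrow> 0) (at 0)"
      by (auto intro!: tendsto_eq_intros)
  qed
  have "((\<lambda>h. (1/(h * c)) *\<^sub>R (f (t + h * c) - f t)) \<longlongrightarrow> d) (at 0)"
    using filterlim_compose[OF vd_h[OF v] fl] by simp
  from tvs_tendsto_scaleR[OF tvs tendsto_const[of c] this]
  have 1: "((\<lambda>h. c *\<^sub>R ((1/(h * c)) *\<^sub>R (f (t + h * c) - f t))) \<longlongrightarrow> c *\<^sub>R d) (at 0)" .
  have "\<forall>\<^sub>F h in at (0::real). c *\<^sub>R ((1/(h * c)) *\<^sub>R (f (t + h * c) - f t)) = (1/h) *\<^sub>R (f (t + h * c) - f t)"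
    unfolding eventually_at using False by (intro exI[of _ 1]) auto
  from Lim_transform_eventually[OF 1 this] show ?thesis .
qed

lemma curve_C2:
  fixes f f1 f2 :: "real \<Rightarrow> 'e::{real_vector,t2_space}"
  assumes tvs: "tvs TYPE('e)" and d1: "\<And>t. vd f t (f1 t)" and d2: "\<And>t. vd f1 t (f2 t)"
    and c1: "continuous_on UNIV f1" and c2: "continuous_on UNIV f2"
  shows "C2 UNIV f"
proof -
  have hd1: "has_dirderiv f t \<xi> (\<xi> *\<^sub>R f1 t)" for t \<xi>
    unfolding has_dirderiv_def using vd_scaled[OF tvs d1[of t], of \<xi>] by simp
  have dd1: "dd f t \<xi> = \<xi> *\<^sub>R f1 t" for t \<xi> by (rule dd_eqI[OF hd1])
  have ddf: "(\<lambda>(v, \<xi>). dd f v \<xi>) = (\<lambda>q. snd q *\<^sub>R f1 (fst q))"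
    by (auto simp: dd1 case_prod_beta)
  have cF: "continuous_on UNIV (\<lambda>q::real\<times>real. snd q *\<^sub>R f1 (fst q))"
    by (intro tvs_continuous_on_scaleR[OF tvs] continuous_on_snd continuous_on_id
        continuous_on_compose2[OF c1 continuous_on_fst[OF continuous_on_id]]) auto
  have C1f: "C1 UNIV f"
    unfolding C1_def using hd1 cF by (auto simp: ddf)
  define F where "F = (\<lambda>q::real\<times>real. snd q *\<^sub>R f1 (fst q))"
  have hd2: "has_dirderiv F (t, \<xi>) (\<tau>, \<nu>) (\<nu> *\<^sub>R f1 t + \<xi> *\<^sub>R (\<tau> *\<^sub>R f2 t))" for t \<xi> \<tau> \<nu>
  proof -
    have cf1: "((\<lambda>h. f1 (t + h * \<tau>)) \<longlongrightarrow> f1 t) (at 0)"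
    proof -
      have "isCont f1 t" using c1 by (simp add: continuous_on_eq_continuous_at)
      moreover have "((\<lambda>h::real. t + h * \<tau>) \<longlongrightarrow> t) (at 0)"
        by (auto intro!: tendsto_eq_intros)
      ultimately show ?thesis using isCont_tendsto_compose by blast
    qed
    have 1: "((\<lambda>h. \<nu> *\<^sub>R f1 (t + h * \<tau>) + \<xi> *\<^sub>R ((1/h) *\<^sub>R (f1 (t + h * \<tau>) - f1 t)))
        \<longlongrightarrow> \<nu> *\<^sub>R f1 t + \<xi> *\<^sub>R (\<tau> *\<^sub>R f2 t)) (at 0)"
      by (intro tvs_tendsto_add[OF tvs] tvs_tendsto_scaleR[OF tvs] tendsto_const cf1 vd_scaled[OF tvs d2])
    have "\<forall>\<^sub>F h in at (0::real). \<nu> *\<^sub>R f1 (t + h * \<tau>) + \<xi> *\<^sub>R ((1/h) *\<^sub>R (f1 (t + h * \<tau>) - f1 t))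
        = (1/h) *\<^sub>R (F ((t, \<xi>) + h *\<^sub>R (\<tau>, \<nu>)) - F (t, \<xi>))"
      unfolding eventually_at
      by (intro exI[of _ 1]) (auto simp: F_def algebra_simps)
    from Lim_transform_eventually[OF 1 this] show ?thesis unfolding has_dirderiv_def .
  qed
  have dd2: "dd F p w = snd w *\<^sub>R f1 (fst p) + snd p *\<^sub>R (fst w *\<^sub>R f2 (fst p))" for p w
    using dd_eqI[OF hd2[of "fst p" "snd p" "fst w" "snd w"]] by simp
  have cdd2: "continuous_on (UNIV \<times> UNIV) (\<lambda>(p, w). dd F p w)"
  proof -
    have "(\<lambda>(p, w). dd F p w) = (\<lambda>q::(real\<times>real)\<times>(real\<times>real).
        snd (snd q) *\<^sub>R f1 (fst (fst q)) + snd (fst q) *\<^sub>R (fst (snd q) *\<^sub>R f2 (fst (fst q))))"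
      by (auto simp: dd2 case_prod_beta)
    moreover have "continuous_on UNIV (\<lambda>q::(real\<times>real)\<times>(real\<times>real).
        snd (snd q) *\<^sub>R f1 (fst (fst q)) + snd (fst q) *\<^sub>R (fst (snd q) *\<^sub>R f2 (fst (fst q))))"
      by (intro tvs_continuous_on_add[OF tvs] tvs_continuous_on_scaleR[OF tvs]
          continuous_on_snd continuous_on_fst continuous_on_id
          continuous_on_compose2[OF c1 continuous_on_fst[OF continuous_on_fst[OF continuous_on_id]]]
          continuous_on_compose2[OF c2 continuous_on_fst[OF continuous_on_fst[OF continuous_on_id]]]) auto
    ultimately show ?thesis by simp
  qed
  have C1F: "C1 (UNIV \<times> UNIV) F"
    unfolding C1_def using cdd2 by (auto intro!: exI hd2 simp: open_Times)
  have "(\<lambda>(v, \<xi>). dd f v \<xi>) = F" by (simp add: ddf F_def)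
  then show ?thesis unfolding C2_def using C1f C1F by simp
qed

lemma vd_glue:
  fixes f p q d dp dq :: "real \<Rightarrow> 'e::{real_vector,t2_space}"
  assumes ab: "\<alpha> < \<beta>"
    and fI: "\<And>t. t \<in> {\<alpha>..\<beta>} \<Longrightarrow> ((\<lambda>s. (1 / (s - t)) *\<^sub>R (f s - f t)) \<longlongrightarrow> d t) (at t within {\<alpha>..\<beta>})"
    and fp: "\<And>s. s \<le> \<alpha> \<Longrightarrow> f s = p s" and fq: "\<And>s. s \<ge> \<beta> \<Longrightarrow> f s = q s"
    and dp: "\<And>t. vd p t (dp t)" and dq: "\<And>t. vd q t (dq t)"
    and ea: "dp \<alpha> = d \<alpha>" and eb: "dq \<beta> = d \<beta>"
  shows "vd f t (if t < \<alpha> then dp t else if t > \<beta> then dq t else d t)"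
proof -
  consider "t < \<alpha>" | "t > \<beta>" | "\<alpha> < t \<and> t < \<beta>" | "t = \<alpha>" | "t = \<beta>" using ab by linarith
  then show ?thesis
  proof cases
    case 1
    have "\<forall>\<^sub>F s in at t. (1 / (s - t)) *\<^sub>R (p s - p t) = (1 / (s - t)) *\<^sub>R (f s - f t)"
      unfolding eventually_at_topological
      by (intro exI[of _ "{..<\<alpha>}"]) (use 1 fp in auto)
    from Lim_transform_eventually[OF dp[of t, unfolded vd_def] this] 1 show ?thesis by (simp add: vd_def)
  next
    case 2
    have "\<forall>\<^sub>F s in at t. (1 / (s - t)) *\<^sub>R (q s - q t) = (1 / (s - t)) *\<^sub>R (f s - f t)"
      unfolding eventually_at_topological
      by (intro exI[of _ "{\<beta><..}"]) (use 2 fq in auto)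
    from Lim_transform_eventually[OF dq[of t, unfolded vd_def] this] 2 ab show ?thesis by (simp add: vd_def)
  next
    case 3
    then have "at t within {\<alpha>..\<beta>} = at t" by (intro at_within_Icc_at) auto
    then show ?thesis using fI[of t] 3 by (simp add: vd_def)
  next
    case 4
    have r: "((\<lambda>s. (1 / (s - t)) *\<^sub>R (f s - f t)) \<longlongrightarrow> d t) (at_right t)"
      using fI[of t] 4 at_within_Icc_at_right[OF ab] ab by simp
    have l0: "((\<lambda>s. (1 / (s - t)) *\<^sub>R (p s - p t)) \<longlongrightarrow> dp t) (at_left t)"
      by (rule tendsto_mono[OF at_le[OF subset_UNIV]]) (use dp[of t] in \<open>simp add: vd_def\<close>)
    have "\<forall>\<^sub>F s in at_left t. (1 / (s - t)) *\<^sub>R (p s - p t) = (1 / (s - t)) *\<^sub>R (f s - f t)"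
      unfolding eventually_at_topological
      by (intro exI[of _ UNIV]) (use 4 fp in auto)
    from Lim_transform_eventually[OF l0 this]
    have l: "((\<lambda>s. (1 / (s - t)) *\<^sub>R (f s - f t)) \<longlongrightarrow> d t) (at_left t)" using ea 4 by simp
    have "((\<lambda>s. (1 / (s - t)) *\<^sub>R (f s - f t)) \<longlongrightarrow> d t) (sup (at_left t) (at_right t))"
      by (rule filterlim_sup[OF l r])
    then show ?thesis using 4 ab by (simp add: vd_def at_eq_sup_left_right[symmetric])
  next
    case 5
    have l: "((\<lambda>s. (1 / (s - t)) *\<^sub>R (f s - f t)) \<longlongrightarrow> d t) (at_left t)"
      using fI[of t] 5 at_within_Icc_at_left[OF ab] ab by simp
    have r0: "((\<lambda>s. (1 / (s - t)) *\<^sub>R (q s - q t)) \<longlongrightarrow> dq t) (at_right t)"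
      by (rule tendsto_mono[OF at_le[OF subset_UNIV]]) (use dq[of t] in \<open>simp add: vd_def\<close>)
    have "\<forall>\<^sub>F s in at_right t. (1 / (s - t)) *\<^sub>R (q s - q t) = (1 / (s - t)) *\<^sub>R (f s - f t)"
      unfolding eventually_at_topological
      by (intro exI[of _ UNIV]) (use 5 fq in auto)
    from Lim_transform_eventually[OF r0 this]
    have r: "((\<lambda>s. (1 / (s - t)) *\<^sub>R (f s - f t)) \<longlongrightarrow> d t) (at_right t)" using eb 5 by simp
    have "((\<lambda>s. (1 / (s - t)) *\<^sub>R (f s - f t)) \<longlongrightarrow> d t) (sup (at_left t) (at_right t))"
      by (rule filterlim_sup[OF l r])
    then show ?thesis using 5 ab by (simp add: vd_def at_eq_sup_left_right[symmetric])
  qed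
qed

lemma vd_quad:
  fixes c0 v w :: "'e::{real_vector,t2_space}"
  assumes tvs: "tvs TYPE('e)"
  shows "vd (\<lambda>s. c0 + (s - c) *\<^sub>R v + ((s - c)^2 / 2) *\<^sub>R w) t (v + (t - c) *\<^sub>R w)"
proof -
  have 1: "((\<lambda>s. v + ((s + t) / 2 - c) *\<^sub>R w) \<longlongrightarrow> v + ((t + t) / 2 - c) *\<^sub>R w) (at t)"
    by (intro tvs_tendsto_add[OF tvs] tvs_tendsto_scaleR[OF tvs] tendsto_const tendsto_intros) auto
  have "\<forall>\<^sub>F s in at t. v + ((s + t) / 2 - c) *\<^sub>R w
      = (1 / (s - t)) *\<^sub>R ((c0 + (s - c) *\<^sub>R v + ((s - c)^2 / 2) *\<^sub>R w) - (c0 + (t - c) *\<^sub>R v + ((t - c)^2 / 2) *\<^sub>R w))"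
    unfolding eventually_at_topological
  proof (intro exI[of _ UNIV] conjI ballI impI)
    show "open (UNIV::real set)" by simp
    show "t \<in> UNIV" by simp
  next
    fix s assume "s \<in> UNIV" "s \<noteq> t"
    then have st: "s - t \<noteq> 0" by simp
    have e1: "(s - c) *\<^sub>R v - (t - c) *\<^sub>R v = (s - t) *\<^sub>R v" by (simp add: algebra_simps)
    have r: "(s - c)^2 / 2 - (t - c)^2 / 2 = (s - t) * ((s + t) / 2 - c)"
      by (simp add: power2_eq_square field_simps)
    have e2: "((s - c)^2 / 2) *\<^sub>R w - ((t - c)^2 / 2) *\<^sub>R w = ((s - t) * ((s + t) / 2 - c)) *\<^sub>R w"
      by (simp only: scaleR_diff_left[symmetric] r)
    have "(c0 + (s - c) *\<^sub>R v + ((s - c)^2 / 2) *\<^sub>R w) - (c0 + (t - c) *\<^sub>R v + ((t - c)^2 / 2) *\<^sub>R w)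
        = (s - t) *\<^sub>R (v + ((s + t) / 2 - c) *\<^sub>R w)"
      using e1 e2 by (simp add: algebra_simps)
    then show "v + ((s + t) / 2 - c) *\<^sub>R w
      = (1 / (s - t)) *\<^sub>R (c0 + (s - c) *\<^sub>R v + ((s - c)^2 / 2) *\<^sub>R w - (c0 + (t - c) *\<^sub>R v + ((t - c)^2 / 2) *\<^sub>R w))"
      using st by simp
  qed
  from Lim_transform_eventually[OF 1 this] show ?thesis by (simp add: vd_def)
qed

lemma vd_lin:
  fixes c0 w :: "'e::{real_vector,t2_space}"
  assumes tvs: "tvs TYPE('e)"
  shows "vd (\<lambda>s. c0 + (s - c) *\<^sub>R w) t w"
proof -
  have e: "(s - c) *\<^sub>R w - (t - c) *\<^sub>R w = (s - t) *\<^sub>R w" for s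
    using scaleR_diff_left[of "s - c" "t - c" w] by simp
  have "\<forall>\<^sub>F s in at t. w = (1 / (s - t)) *\<^sub>R ((c0 + (s - c) *\<^sub>R w) - (c0 + (t - c) *\<^sub>R w))"
    unfolding eventually_at_topological
    by (intro exI[of _ UNIV]) (auto simp: e)
  from Lim_transform_eventually[OF tendsto_const this] show ?thesis by (simp add: vd_def)
qed

context rm begin

lemma crit_int:
  assumes c: "energy_critical \<Omega> g \<alpha> \<beta> x" and y: "C1_curve UNIV \<alpha> \<beta> y" "y \<alpha> = 0" "y \<beta> = 0"
  shows "integral {\<alpha>..\<beta>} (JJ x y) = 0"
proof -
  have x: "C1_curve \<Omega> \<alpha> \<beta> x" using c unfolding energy_critical_def by blast
  have "((\<lambda>s. (energy g \<alpha> \<beta> (\<lambda>t. x t + s *\<^sub>R y t) - energy g \<alpha> \<beta> x) / s) \<longlongrightarrow> 0) (at 0)"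
    using c y unfolding energy_critical_def by blast
  from tendsto_unique[OF _ energy_deriv[OF x y(1)] this] show ?thesis by simp
qed

lemma int_crit:
  assumes x: "C1_curve \<Omega> \<alpha> \<beta> x"
    and H: "\<And>y. C1_curve UNIV \<alpha> \<beta> y \<Longrightarrow> y \<alpha> = 0 \<Longrightarrow> y \<beta> = 0 \<Longrightarrow> integral {\<alpha>..\<beta>} (JJ x y) = 0"
  shows "energy_critical \<Omega> g \<alpha> \<beta> x"
  unfolding energy_critical_def
proof (intro conjI allI impI x)
  fix y :: "real \<Rightarrow> 'v" assume y: "C1_curve UNIV \<alpha> \<beta> y \<and> y \<alpha> = 0 \<and> y \<beta> = 0"
  then show "((\<lambda>s. (energy g \<alpha> \<beta> (\<lambda>t. x t + s *\<^sub>R y t) - energy g \<alpha> \<beta> x) / s) \<longlongrightarrow> 0) (at 0)"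
    using energy_deriv[OF x, of y] H[of y] by simp
qed

lemma phi_curve:
  fixes \<phi> \<phi>' :: "real \<Rightarrow> real" and w :: 'v
  assumes U: "open U" "{\<alpha>..\<beta>} \<subseteq> U" and d: "\<And>t. t \<in> U \<Longrightarrow> (\<phi> has_real_derivative \<phi>' t) (at t)"
    and c: "continuous_on U \<phi>'"
  shows "C1_curve UNIV \<alpha> \<beta> (\<lambda>t. \<phi> t *\<^sub>R w)" "\<And>t. t \<in> {\<alpha>..\<beta>} \<Longrightarrow> vel \<alpha> \<beta> (\<lambda>t. \<phi> t *\<^sub>R w) t = \<phi>' t *\<^sub>R w"
proof -
  have vd\<phi>: "vd \<phi> t (\<phi>' t)" if "t \<in> U" for t
    using d[OF that] unfolding vd_def has_field_derivative_iff by (simp add: divide_inverse mult.commute)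
  have hd: "has_dirderiv (\<lambda>t. \<phi> t *\<^sub>R w) t \<xi> ((\<xi> * \<phi>' t) *\<^sub>R w)" if "t \<in> U" for t \<xi>
  proof -
    have "((\<lambda>h. (1/h) *\<^sub>R (\<phi> (t + h * \<xi>) - \<phi> t)) \<longlongrightarrow> \<xi> *\<^sub>R \<phi>' t) (at 0)"
      by (rule vd_scaled[OF tvs_real vd\<phi>[OF that]])
    from tvs_tendsto_scaleR[OF tvsV this tendsto_const[of w]]
    show ?thesis unfolding has_dirderiv_def by (simp add: scaleR_diff_left[symmetric] mult.commute)
  qed
  have dd: "dd (\<lambda>t. \<phi> t *\<^sub>R w) t \<xi> = (\<xi> * \<phi>' t) *\<^sub>R w" if "t \<in> U" for t \<xi>
    by (rule dd_eqI[OF hd[OF that]])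
  have cc: "continuous_on (U \<times> UNIV) (\<lambda>q::real\<times>real. (snd q * \<phi>' (fst q)) *\<^sub>R w)"
    by (intro tvs_continuous_on_scaleR[OF tvsV] continuous_on_mult continuous_on_snd continuous_on_id
        continuous_on_const continuous_on_compose2[OF c continuous_on_fst[OF continuous_on_id]]) auto
  have C: "C1 U (\<lambda>t. \<phi> t *\<^sub>R w)"
    unfolding C1_def
  proof (intro conjI ballI allI)
    show "open U" by (rule U(1))
    fix t \<xi> assume "t \<in> U"
    then show "\<exists>d. has_dirderiv (\<lambda>t. \<phi> t *\<^sub>R w) t \<xi> d" using hd by blast
  next
    show "continuous_on (U \<times> UNIV) (\<lambda>(v, \<xi>). dd (\<lambda>t. \<phi> t *\<^sub>R w) v \<xi>)"
      by (rule continuous_on_eq[OF cc]) (auto simp: dd)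
  qed
  show "C1_curve UNIV \<alpha> \<beta> (\<lambda>t. \<phi> t *\<^sub>R w)" unfolding C1_curve_def using C U by blast
  fix t assume t: "t \<in> {\<alpha>..\<beta>}"
  show "vel \<alpha> \<beta> (\<lambda>t. \<phi> t *\<^sub>R w) t = \<phi>' t *\<^sub>R w"
    using ext_vel[OF ab C U(2) _ t] dd t U(2) by auto
qed

lemma curve_cont_I:
  fixes x :: "real \<Rightarrow> 'v"
  assumes "C1_curve S \<alpha> \<beta> x"
  shows "continuous_on {\<alpha>..\<beta>} x" "continuous_on {\<alpha>..\<beta>} (vel \<alpha> \<beta> x)"
proof -
  obtain U X where X: "open U" "{\<alpha>..\<beta>} \<subseteq> U" "C1 U X" "\<forall>t\<in>{\<alpha>..\<beta>}. X t = x t"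
    "continuous_on U X" "continuous_on U (\<lambda>t. dd X t 1)"
    "\<forall>t\<in>{\<alpha>..\<beta>}. vel \<alpha> \<beta> x t = dd X t 1" "x ` {\<alpha>..\<beta>} \<subseteq> S"
    by (rule curve_ext[OF assms])
  show "continuous_on {\<alpha>..\<beta>} x"
    using continuous_on_subset[OF X(5) X(2)] X(4) by (metis continuous_on_cong)
  show "continuous_on {\<alpha>..\<beta>} (vel \<alpha> \<beta> x)"
    using continuous_on_subset[OF X(6) X(2)] X(7) by (metis (mono_tags, lifting) continuous_on_cong)
qed

lemma g_comp_cont:
  fixes a b c :: "real \<Rightarrow> 'v"
  assumes "continuous_on S a" "continuous_on S b" "continuous_on S c" "a ` S \<subseteq> \<Omega>"
  shows "continuous_on S (\<lambda>t. g (a t) (b t) (c t))"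
proof -
  have "continuous_on S (\<lambda>t. G3 (a t, b t, c t))"
    by (rule continuous_on_compose2[OF G3_cont]) (use assms in \<open>auto simp: W3_def intro!: continuous_on_Pair\<close>)
  then show ?thesis by (simp add: G3_def)
qed

lemma A_comp_cont:
  fixes a b c :: "real \<Rightarrow> 'v"
  assumes "continuous_on S a" "continuous_on S b" "continuous_on S c" "a ` S \<subseteq> \<Omega>"
  shows "continuous_on S (\<lambda>t. A (a t) (b t) (c t))"
proof -
  have "continuous_on S (\<lambda>t. (\<lambda>(v, \<xi>, w). A v \<xi> w) (a t, b t, c t))"
    by (rule continuous_on_compose2[OF A_cont]) (use assms in \<open>auto intro!: continuous_on_Pair\<close>)
  then show ?thesis by simp
qed

lemma crit_DBR:
  assumes c: "energy_critical \<Omega> g \<alpha> \<beta> x" and t: "t \<in> {\<alpha>..\<beta>}"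
  shows "((\<lambda>s. g (x s) (vel \<alpha> \<beta> x s) w) has_real_derivative
            g (x t) (A (x t) w (vel \<alpha> \<beta> x t)) (vel \<alpha> \<beta> x t)) (at t within {\<alpha>..\<beta>})"
proof -
  let ?I = "{\<alpha>..\<beta>}"
  have x: "C1_curve \<Omega> \<alpha> \<beta> x" using c unfolding energy_critical_def by blast
  have xO: "x ` ?I \<subseteq> \<Omega>" using x unfolding C1_curve_def by blast
  note cx = curve_cont_I[OF x]
  define a where "a = (\<lambda>t. g (x t) (A (x t) w (vel \<alpha> \<beta> x t)) (vel \<alpha> \<beta> x t))"
  define b where "b = (\<lambda>t. g (x t) (vel \<alpha> \<beta> x t) w)"
  have ca: "continuous_on ?I a" unfolding a_def
    by (intro g_comp_cont A_comp_cont cx continuous_on_const xO)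
  have cb: "continuous_on ?I b" unfolding b_def
    by (intro g_comp_cont cx continuous_on_const xO)
  have "(b has_real_derivative a t) (at t within ?I)"
  proof (rule DBR[OF ab ca cb _ t])
    fix \<phi> \<phi>' :: "real \<Rightarrow> real" and U
    assume U: "open U" "?I \<subseteq> U" and d: "\<forall>t\<in>U. (\<phi> has_real_derivative \<phi>' t) (at t)"
      and c\<phi>: "continuous_on U \<phi>'" and z: "\<phi> \<alpha> = 0" "\<phi> \<beta> = 0"
    note pc = phi_curve[OF U, where \<phi>=\<phi> and \<phi>'=\<phi>' and w=w, OF _ c\<phi>]
    have y: "C1_curve UNIV \<alpha> \<beta> (\<lambda>t. \<phi> t *\<^sub>R w)" using pc(1) d by blast
    have vy: "\<And>t. t \<in> ?I \<Longrightarrow> vel \<alpha> \<beta> (\<lambda>t. \<phi> t *\<^sub>R w) t = \<phi>' t *\<^sub>R w" using pc(2) d by blast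
    have "integral ?I (JJ x (\<lambda>t. \<phi> t *\<^sub>R w)) = 0"
      by (rule crit_int[OF c y]) (use z in auto)
    moreover have "JJ x (\<lambda>t. \<phi> t *\<^sub>R w) s = \<phi> s * a s + \<phi>' s * b s" if s: "s \<in> ?I" for s
    proof -
      have xs: "x s \<in> \<Omega>" using xO s by auto
      have "A (x s) (\<phi> s *\<^sub>R w) (vel \<alpha> \<beta> x s) = \<phi> s *\<^sub>R A (x s) w (vel \<alpha> \<beta> x s)"
        using linear_scale[OF A_lin2[OF xs, of "vel \<alpha> \<beta> x s"]] by simp
      then show ?thesis unfolding JJ_def a_def b_def using vy[OF s] g_scale1[OF xs] g_scale2[OF xs] by simp
    qed
    ultimately show "integral ?I (\<lambda>t. \<phi> t * a t + \<phi>' t * b t) = 0"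
      using integral_cong[of ?I "JJ x (\<lambda>t. \<phi> t *\<^sub>R w)" "\<lambda>t. \<phi> t * a t + \<phi>' t * b t"] by simp
  qed
  then show ?thesis by (simp add: a_def b_def)
qed

end

lemma h_to_vel:
  fixes Z z :: "real \<Rightarrow> 'v::{real_vector,t2_space}"
  assumes ab: "\<alpha> < \<beta>" and h: "((\<lambda>h. (1/h) *\<^sub>R (Z (t + h) - Z t)) \<longlongrightarrow> d) (at 0)"
    and t: "t \<in> {\<alpha>..\<beta>}" and eq: "\<forall>s\<in>{\<alpha>..\<beta>}. Z s = z s"
  shows "vel \<alpha> \<beta> z t = d"
proof (rule vel_unique[OF ab t])
  have "((\<lambda>h. (1 / ((t + h) - t)) *\<^sub>R (Z (t + h) - Z t)) \<longlongrightarrow> d) (at 0)" using h by simp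
  then have "((\<lambda>s. (1 / (s - t)) *\<^sub>R (Z s - Z t)) \<longlongrightarrow> d) (at t)" by (rule at0_to_at)
  then have 1: "((\<lambda>s. (1 / (s - t)) *\<^sub>R (Z s - Z t)) \<longlongrightarrow> d) (at t within {\<alpha>..\<beta>})"
    by (rule tendsto_within_subset) simp
  have "\<forall>\<^sub>F s in at t within {\<alpha>..\<beta>}. (1 / (s - t)) *\<^sub>R (Z s - Z t) = (1 / (s - t)) *\<^sub>R (z s - z t)"
    unfolding eventually_at_topological using eq t by (intro exI[of _ UNIV]) auto
  from Lim_transform_eventually[OF 1 this]
  show "((\<lambda>s. (1 / (s - t)) *\<^sub>R (z s - z t)) \<longlongrightarrow> d) (at t within {\<alpha>..\<beta>})" .
qed

context rm begin

lemma C2_ext: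
  fixes x :: "real \<Rightarrow> 'v"
  assumes "C2_curve S \<alpha> \<beta> x"
  obtains U X where "open U" "{\<alpha>..\<beta>} \<subseteq> U" "C1 U X" "\<forall>t\<in>{\<alpha>..\<beta>}. X t = x t"
    "\<And>t. t \<in> U \<Longrightarrow> ((\<lambda>h. (1/h) *\<^sub>R (dd X (t + h) 1 - dd X t 1)) \<longlongrightarrow> dd (\<lambda>(v, \<xi>). dd X v \<xi>) (t, 1) (1, 0)) (at 0)"
proof -
  obtain U X where X: "open U" "{\<alpha>..\<beta>} \<subseteq> U" "C2 U X" "\<forall>t\<in>{\<alpha>..\<beta>}. X t = x t"
    using assms unfolding C2_curve_def by blast
  have C1: "C1 U X" and C1': "C1 (U \<times> UNIV) (\<lambda>(v, \<xi>). dd X v \<xi>)" using X(3) unfolding C2_def by auto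
  show ?thesis
  proof (rule that[OF X(1,2) C1 X(4)])
    fix t assume t: "t \<in> U"
    have "(t, 1::real) \<in> U \<times> UNIV" using t by simp
    from C1_has_dirderiv[OF C1' this, of "(1, 0)"]
    show "((\<lambda>h. (1/h) *\<^sub>R (dd X (t + h) 1 - dd X t 1)) \<longlongrightarrow> dd (\<lambda>(v, \<xi>). dd X v \<xi>) (t, 1) (1, 0)) (at 0)"
      unfolding has_dirderiv_def by simp
  qed
qed

lemma C2_C1_curve: "C2_curve S \<alpha> \<beta> x \<Longrightarrow> C1_curve S \<alpha> \<beta> x"
  unfolding C2_curve_def C1_curve_def C2_def by blast

lemma partA:
  fixes x :: "real \<Rightarrow> 'v"
  assumes x2: "C2_curve \<Omega> \<alpha> \<beta> x"
  shows "energy_critical \<Omega> g \<alpha> \<beta> x \<longleftrightarrow> geodesic \<Omega> A \<alpha> \<beta> x"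
proof -
  let ?I = "{\<alpha>..\<beta>}"
  have x: "C1_curve \<Omega> \<alpha> \<beta> x" by (rule C2_C1_curve[OF x2])
  obtain U X where X: "open U" "?I \<subseteq> U" "C1 U X" "\<forall>t\<in>?I. X t = x t"
    "\<And>t. t \<in> U \<Longrightarrow> ((\<lambda>h. (1/h) *\<^sub>R (dd X (t + h) 1 - dd X t 1)) \<longlongrightarrow> dd (\<lambda>(v, \<xi>). dd X v \<xi>) (t, 1) (1, 0)) (at 0)"
    using C2_ext[OF x2] by blast
  define X' where "X' = (\<lambda>t. dd X t 1)"
  define X2 where "X2 = (\<lambda>t. dd (\<lambda>(v, \<xi>). dd X v \<xi>) (t, 1::real) (1::real, 0::real))"
  have xO: "x ` ?I \<subseteq> \<Omega>" using x unfolding C1_curve_def by blast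
  have XO: "t \<in> ?I \<Longrightarrow> X t \<in> \<Omega>" for t using xO X(4) by auto
  have vx: "t \<in> ?I \<Longrightarrow> vel \<alpha> \<beta> x t = X' t" for t using ext_vel[OF ab X(3,2,4)] by (simp add: X'_def)
  have vvx: "t \<in> ?I \<Longrightarrow> vel \<alpha> \<beta> (vel \<alpha> \<beta> x) t = X2 t" for t
    using h_to_vel[OF ab X(5)[of t] _ ] vx X(2) by (auto simp: X'_def X2_def)
  have dX: "t \<in> U \<Longrightarrow> ((\<lambda>h. (1/h) *\<^sub>R (X (t + h) - X t)) \<longlongrightarrow> X' t) (at 0)" for t
    using C1_curve_tendsto[OF X(3)] by (simp add: X'_def)
  have dX': "t \<in> U \<Longrightarrow> ((\<lambda>h. (1/h) *\<^sub>R (X' (t + h) - X' t)) \<longlongrightarrow> X2 t) (at 0)" for t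
    using X(5) by (simp add: X'_def X2_def)
  show ?thesis
  proof
    assume c: "energy_critical \<Omega> g \<alpha> \<beta> x"
    have geq: "X2 t + A (X t) (X' t) (X' t) = 0" if t: "t \<in> ?I" for t
    proof -
      have tU: "t \<in> U" using t X(2) by auto
      have Xt: "X t \<in> \<Omega>" by (rule XO[OF t])
      define \<gamma> where "\<gamma> = X2 t + A (X t) (X' t) (X' t)"
      have "g (X t) \<gamma> w = 0" for w
      proof -
        have ch: "((\<lambda>s. g (X s) (X' s) w) has_real_derivative
            g (X t) (A (X t) (X' t) (X' t)) w + g (X t) (X' t) (A (X t) (X' t) w)
            + g (X t) (X2 t) w + g (X t) (X' t) 0) (at t)"
          using g_chain[OF dX[OF tU] dX'[OF tU] _ Xt, of "\<lambda>_. w" 0] by simp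
        have 1: "((\<lambda>s. g (x s) (vel \<alpha> \<beta> x s) w) has_real_derivative
            g (X t) (A (X t) (X' t) (X' t)) w + g (X t) (X' t) (A (X t) (X' t) w)
            + g (X t) (X2 t) w + g (X t) (X' t) 0) (at t within ?I)"
          by (rule has_field_derivative_transform_within[OF has_field_derivative_at_within[OF ch] zero_less_one t])
             (use X(4) vx in auto)
        have 2: "((\<lambda>s. g (x s) (vel \<alpha> \<beta> x s) w) has_real_derivative
            g (x t) (A (x t) w (vel \<alpha> \<beta> x t)) (vel \<alpha> \<beta> x t)) (at t within ?I)"
          by (rule crit_DBR[OF c t])
        have eq: "g (X t) (A (X t) (X' t) (X' t)) w + g (X t) (X' t) (A (X t) (X' t) w)
            + g (X t) (X2 t) w + g (X t) (X' t) 0 = g (x t) (A (x t) w (vel \<alpha> \<beta> x t)) (vel \<alpha> \<beta> x t)"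
          by (rule has_field_derivative_unique[OF 1 2 Icc_at_nbot[OF ab t]])
        have "g (x t) (A (x t) w (vel \<alpha> \<beta> x t)) (vel \<alpha> \<beta> x t) = g (X t) (X' t) (A (X t) (X' t) w)"
          using X(4) vx[OF t] t g_sym[OF Xt] A_sym[OF Xt] by simp
        then have "g (X t) (A (X t) (X' t) (X' t)) w + g (X t) (X2 t) w = 0"
          using eq g_zero2[OF Xt] by simp
        then show ?thesis unfolding \<gamma>_def using g_add1[OF Xt] by (simp add: add.commute)
      qed
      then have "g (X t) \<gamma> \<gamma> = 0" by blast
      then show ?thesis using g_pos[OF Xt, of \<gamma>] unfolding \<gamma>_def by fastforce
    qed
    show "geodesic \<Omega> A \<alpha> \<beta> x"
      unfolding geodesic_def using x2 geq vx vvx X(4) by auto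
  next
    assume geo: "geodesic \<Omega> A \<alpha> \<beta> x"
    have geq: "X2 t + A (X t) (X' t) (X' t) = 0" if t: "t \<in> ?I" for t
      using geo t vx vvx X(4) unfolding geodesic_def by auto
    show "energy_critical \<Omega> g \<alpha> \<beta> x"
    proof (rule int_crit[OF x])
      fix y :: "real \<Rightarrow> 'v" assume y: "C1_curve UNIV \<alpha> \<beta> y" "y \<alpha> = 0" "y \<beta> = 0"
      obtain U2 Y where Y: "open U2" "?I \<subseteq> U2" "C1 U2 Y" "\<forall>t\<in>?I. Y t = y t"
        "continuous_on U2 Y" "continuous_on U2 (\<lambda>t. dd Y t 1)"
        "\<forall>t\<in>?I. vel \<alpha> \<beta> y t = dd Y t 1"
        by (rule curve_ext[OF y(1)])
      define k' where "k' = (\<lambda>t. g (X t) (A (X t) (X' t) (X' t)) (Y t) + g (X t) (X' t) (A (X t) (X' t) (Y t))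
            + g (X t) (X2 t) (Y t) + g (X t) (X' t) (dd Y t 1))"
      have dk: "((\<lambda>s. g (X s) (X' s) (Y s)) has_real_derivative k' t) (at t within ?I)" if t: "t \<in> ?I" for t
      proof -
        have tU: "t \<in> U" "t \<in> U2" using t X(2) Y(2) by auto
        show ?thesis unfolding k'_def
          by (rule has_field_derivative_at_within, rule g_chain[OF dX[OF tU(1)] dX'[OF tU(1)] C1_curve_tendsto[OF Y(3) tU(2)] XO[OF t]])
      qed
      have "integral ?I k' = g (X \<beta>) (X' \<beta>) (Y \<beta>) - g (X \<alpha>) (X' \<alpha>) (Y \<alpha>)"
        by (rule ftc_real[OF less_imp_le[OF ab] dk])
      also have "\<dots> = 0" using Y(4) y(2,3) ab g_zero2[OF XO[of \<alpha>]] g_zero2[OF XO[of \<beta>]] by simp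
      finally have k0: "integral ?I k' = 0" .
      have "integral ?I (JJ x y) = integral ?I k'"
      proof (rule integral_cong)
        fix t assume t: "t \<in> ?I"
        have Xt: "X t \<in> \<Omega>" by (rule XO[OF t])
        have "X2 t = - A (X t) (X' t) (X' t)" using geq[OF t] by (simp add: eq_neg_iff_add_eq_0)
        then have "g (X t) (X2 t) (Y t) = - g (X t) (A (X t) (X' t) (X' t)) (Y t)"
          using g_scale1[OF Xt, of "-1"] by simp
        moreover have "g (X t) (X' t) (A (X t) (X' t) (Y t)) = g (X t) (A (X t) (Y t) (X' t)) (X' t)"
          using g_sym[OF Xt] A_sym[OF Xt] by simp
        ultimately show "JJ x y t = k' t"
          unfolding JJ_def k'_def using X(4) Y(4,7) vx[OF t] t by simp
      qed
      then show "integral ?I (JJ x y) = 0" using k0 by simp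
    qed
  qed
qed

end

lemma C1_chain_gen:
  fixes G :: "'e::{real_vector,t2_space} \<Rightarrow> real" and b w :: "real \<Rightarrow> 'e"
  assumes tvs: "tvs TYPE('e)" and C: "C1 W G"
    and cb: "isCont b 0" and cw: "isCont w 0" and b0: "b 0 \<in> W"
  shows "((\<lambda>h. (G (b h + h *\<^sub>R w h) - G (b h)) / h) \<longlongrightarrow> dd G (b 0) (w 0)) (at 0)"
proof -
  have oW: "open W" using C unfolding C1_def by auto
  have fst0: "((\<lambda>q::real\<times>real. fst q) \<longlongrightarrow> 0) (at (0,0))"
    using tendsto_fst[OF tendsto_ident_at[of "(0::real,0::real)" UNIV]] by simp
  have wf: "((\<lambda>q::real\<times>real. w (fst q)) \<longlongrightarrow> w 0) (at (0,0))"
    using isCont_tendsto_compose[OF cw fst0] by simp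
  have bf: "((\<lambda>q::real\<times>real. b (fst q)) \<longlongrightarrow> b 0) (at (0,0))"
    using isCont_tendsto_compose[OF cb fst0] by simp
  have cl: "isCont (\<lambda>q::real\<times>real. b (fst q) + snd q *\<^sub>R w (fst q)) (0,0)"
    unfolding continuous_at using tvs_tendsto_add[OF tvs bf tvs_tendsto_scaleR[OF tvs tendsto_snd[OF tendsto_ident_at] wf]]
    by simp
  define H where "H = (\<lambda>h \<sigma>. G (b h + \<sigma> *\<^sub>R w h))"
  define \<Phi> where "\<Phi> = (\<lambda>q::real\<times>real. dd G (b (fst q) + snd q *\<^sub>R w (fst q)) (w (fst q)))"
  have cont: "isCont \<Phi> (0,0)"
  proof -
    have "isCont (\<lambda>q::real\<times>real. (b (fst q) + snd q *\<^sub>R w (fst q), w (fst q))) (0,0)"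
      using cl wf unfolding continuous_at by (intro tendsto_Pair) auto
    moreover have "isCont (\<lambda>q. dd G (fst q) (snd q))
        ((\<lambda>q::real\<times>real. (b (fst q) + snd q *\<^sub>R w (fst q), w (fst q))) (0,0))"
      using C1_dd_isCont[OF C b0] by simp
    ultimately show ?thesis using isCont_o2 unfolding \<Phi>_def by fastforce
  qed
  obtain d where d: "d > 0" "\<And>h \<sigma>. \<bar>h\<bar> < d \<Longrightarrow> \<bar>\<sigma>\<bar> \<le> \<bar>h\<bar> \<Longrightarrow> b h + \<sigma> *\<^sub>R w h \<in> W"
    using isCont_small_box[OF cl oW] b0 by auto
  have 2: "((\<lambda>h. (H h h - H h 0) / h) \<longlongrightarrow> \<Phi> (0,0)) (at 0)"
  proof (rule mvt_quot[OF cont])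
    show "\<exists>d>0. \<forall>t \<sigma>. \<bar>t\<bar> < d \<longrightarrow> \<bar>\<sigma>\<bar> \<le> \<bar>t\<bar> \<longrightarrow> (H t has_real_derivative \<Phi> (t, \<sigma>)) (at \<sigma>)"
      using d unfolding H_def \<Phi>_def by (auto intro!: C1_line_deriv[OF C])
  qed
  then show ?thesis by (simp add: H_def \<Phi>_def)
qed

context rm begin

lemma chain_first:
  fixes X :: "real \<Rightarrow> 'v"
  assumes C: "C1 U X" and t0: "t0 \<in> U" and Xt: "X t0 \<in> \<Omega>"
    and c': "continuous_on U (\<lambda>t. dd X t 1)"
  shows "((\<lambda>s. g (X s) (dd X s 1) \<eta> - g (X t0) (dd X s 1) \<eta>) has_real_derivative
          g (X t0) (A (X t0) (dd X t0 1) (dd X t0 1)) \<eta> + g (X t0) (dd X t0 1) (A (X t0) (dd X t0 1) \<eta>)) (at t0)"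
proof -
  have oU: "open U" using C unfolding C1_def by auto
  define X' where "X' = (\<lambda>t. dd X t 1)"
  define wv where "wv = (\<lambda>h::real. if h = 0 then X' t0 else (1/h) *\<^sub>R (X (t0 + h) - X t0))"
  define b where "b = (\<lambda>h. (X t0, X' (t0 + h), \<eta>))"
  define w where "w = (\<lambda>h. (wv h, 0::'v, 0::'v))"
  have cwv: "isCont wv 0"
    unfolding continuous_at
  proof -
    have "\<forall>\<^sub>F h in at (0::real). (1/h) *\<^sub>R (X (t0 + h) - X t0) = wv h"
      unfolding eventually_at by (intro exI[of _ 1]) (auto simp: wv_def)
    then show "(wv \<longlongrightarrow> wv 0) (at 0)"
      using Lim_transform_eventually[OF C1_curve_tendsto[OF C t0]] by (simp add: wv_def X'_def)
  qed
  have cX': "isCont X' t0" using c' oU t0 by (simp add: X'_def continuous_on_eq_continuous_at)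
  have cX'h: "isCont (\<lambda>h. X' (t0 + h)) 0"
  proof -
    have "((\<lambda>h::real. t0 + h) \<longlongrightarrow> t0) (at 0)" by (auto intro!: tendsto_eq_intros)
    from isCont_tendsto_compose[OF cX' this] show ?thesis unfolding continuous_at by simp
  qed
  have cb: "isCont b 0" unfolding b_def continuous_at
    using cX'h unfolding continuous_at by (intro tendsto_Pair tendsto_const) auto
  have cw: "isCont w 0" unfolding w_def continuous_at
    using cwv unfolding continuous_at by (intro tendsto_Pair tendsto_const) auto
  have b0: "b 0 \<in> W3" using Xt by (simp add: b_def W3_def)
  have 1: "((\<lambda>h. (G3 (b h + h *\<^sub>R w h) - G3 (b h)) / h) \<longlongrightarrow> dd G3 (b 0) (w 0)) (at 0)"
    by (rule C1_chain_gen[OF tvs3 gC1 cb cw b0])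
  have "\<forall>\<^sub>F h in at (0::real). (G3 (b h + h *\<^sub>R w h) - G3 (b h)) / h =
      ((g (X (t0 + h)) (X' (t0 + h)) \<eta> - g (X t0) (X' (t0 + h)) \<eta>) - (g (X t0) (X' t0) \<eta> - g (X t0) (X' t0) \<eta>)) / h"
    unfolding eventually_at by (intro exI[of _ 1]) (auto simp: b_def w_def wv_def G3_def)
  from Lim_transform_eventually[OF 1 this]
  have "((\<lambda>h. ((g (X (t0 + h)) (X' (t0 + h)) \<eta> - g (X t0) (X' (t0 + h)) \<eta>) - (g (X t0) (X' t0) \<eta> - g (X t0) (X' t0) \<eta>)) / h)
      \<longlongrightarrow> dd G3 (b 0) (w 0)) (at 0)" .
  moreover have "dd G3 (b 0) (w 0) = g (X t0) (A (X t0) (X' t0) (X' t0)) \<eta> + g (X t0) (X' t0) (A (X t0) (X' t0) \<eta>)"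
    using dd_G3[OF Xt] g_zero1[OF Xt] g_zero2[OF Xt] by (simp add: b_def w_def wv_def)
  ultimately show ?thesis unfolding DERIV_def by (simp add: X'_def)
qed

end

context rm begin

lemma partB:
  fixes x :: "real \<Rightarrow> 'v" and L :: "('v \<Rightarrow> real) set"
  assumes L: "\<forall>l\<in>L. linear l \<and> continuous_on UNIV l"
    and sepI: "\<Inter>{{w. l w = 0} | l. l \<in> L} = {0}"
    and rep: "\<forall>l\<in>L. \<forall>v\<in>\<Omega>. \<exists>\<eta>. \<forall>w. l w = g v \<eta> w"
    and c: "energy_critical \<Omega> g \<alpha> \<beta> x"
  shows "C2_curve \<Omega> \<alpha> \<beta> x \<and> geodesic \<Omega> A \<alpha> \<beta> x"
proof -
  let ?I = "{\<alpha>..\<beta>}"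
  have x: "C1_curve \<Omega> \<alpha> \<beta> x" using c unfolding energy_critical_def by blast
  obtain U X where X: "open U" "?I \<subseteq> U" "C1 U X" "\<forall>t\<in>?I. X t = x t"
    "continuous_on U X" "continuous_on U (\<lambda>t. dd X t 1)"
    "\<forall>t\<in>?I. vel \<alpha> \<beta> x t = dd X t 1" "x ` ?I \<subseteq> \<Omega>"
    by (rule curve_ext[OF x])
  have xO: "t \<in> ?I \<Longrightarrow> x t \<in> \<Omega>" for t using X(8) by auto
  have sep: "u = 0" if "\<forall>l\<in>L. l u = 0" for u
  proof -
    have "u \<in> \<Inter>{{w. l w = 0} | l. l \<in> L}" using that by blast
    then show ?thesis using sepI by simp
  qed
  note cx = curve_cont_I[OF x]
  define \<zeta> where "\<zeta> = (\<lambda>t. (-1::real) *\<^sub>R A (x t) (vel \<alpha> \<beta> x t) (vel \<alpha> \<beta> x t))"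
  have c\<zeta>: "continuous_on ?I \<zeta>"
    unfolding \<zeta>_def by (intro tvs_continuous_on_scaleR[OF tvsV] continuous_on_const A_comp_cont cx X(8))
  have dl: "((\<lambda>s. l (vel \<alpha> \<beta> x s)) has_real_derivative l (\<zeta> t0)) (at t0 within ?I)"
    if l: "l \<in> L" and t0: "t0 \<in> ?I" for l t0
  proof -
    have x0: "x t0 \<in> \<Omega>" by (rule xO[OF t0])
    obtain \<eta> where \<eta>: "\<And>w. l w = g (x t0) \<eta> w" using rep l x0 by blast
    have t0U: "t0 \<in> U" using t0 X(2) by auto
    have X0: "X t0 = x t0" "dd X t0 1 = vel \<alpha> \<beta> x t0" using X(4,7) t0 by auto
    have db: "((\<lambda>s. g (x s) (vel \<alpha> \<beta> x s) \<eta>) has_real_derivative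
            g (x t0) (A (x t0) \<eta> (vel \<alpha> \<beta> x t0)) (vel \<alpha> \<beta> x t0)) (at t0 within ?I)"
      by (rule crit_DBR[OF c t0])
    have dD: "((\<lambda>s. g (X s) (dd X s 1) \<eta> - g (X t0) (dd X s 1) \<eta>) has_real_derivative
          g (X t0) (A (X t0) (dd X t0 1) (dd X t0 1)) \<eta> + g (X t0) (dd X t0 1) (A (X t0) (dd X t0 1) \<eta>)) (at t0 within ?I)"
      by (rule has_field_derivative_at_within, rule chain_first[OF X(3) t0U _ X(6)]) (use X0 x0 in simp)
    have dd: "((\<lambda>s. g (x s) (vel \<alpha> \<beta> x s) \<eta> - (g (X s) (dd X s 1) \<eta> - g (X t0) (dd X s 1) \<eta>)) has_real_derivative
        g (x t0) (A (x t0) \<eta> (vel \<alpha> \<beta> x t0)) (vel \<alpha> \<beta> x t0) -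
        (g (X t0) (A (X t0) (dd X t0 1) (dd X t0 1)) \<eta> + g (X t0) (dd X t0 1) (A (X t0) (dd X t0 1) \<eta>)))
        (at t0 within ?I)"
      by (rule DERIV_diff[OF db dD])
    have val: "g (x t0) (A (x t0) \<eta> (vel \<alpha> \<beta> x t0)) (vel \<alpha> \<beta> x t0) -
        (g (X t0) (A (X t0) (dd X t0 1) (dd X t0 1)) \<eta> + g (X t0) (dd X t0 1) (A (X t0) (dd X t0 1) \<eta>))
        = l (\<zeta> t0)"
    proof -
      have neg: "g (x t0) \<eta> (- a) = - g (x t0) \<eta> a" for a using g_scale2[OF x0, of \<eta> "-1" a] by simp
      show ?thesis using X0 g_sym[OF x0] A_sym[OF x0] neg by (simp add: \<eta> \<zeta>_def)
    qed
    show ?thesis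
      by (rule has_field_derivative_transform_within[OF dd[unfolded val] zero_less_one t0])
         (use X(4,7) X0 \<eta> g_sym[OF x0] in simp)
  qed
  have w2s: "((\<lambda>s. (1 / (s - t)) *\<^sub>R (vel \<alpha> \<beta> x s - vel \<alpha> \<beta> x t)) \<longlongrightarrow> \<zeta> t) (at t within ?I)"
    if t: "t \<in> ?I" for t
    by (rule weak_to_strong[OF lcs ab c\<zeta> _ sep dl t]) (use L in auto)
  have vv: "vel \<alpha> \<beta> (vel \<alpha> \<beta> x) t = \<zeta> t" if t: "t \<in> ?I" for t
    by (rule vel_unique[OF ab t w2s[OF t]])
  have geq: "vel \<alpha> \<beta> (vel \<alpha> \<beta> x) t + A (x t) (vel \<alpha> \<beta> x t) (vel \<alpha> \<beta> x t) = 0" if t: "t \<in> ?I" for t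
    using vv[OF t] by (simp add: \<zeta>_def)
  define va where "va = vel \<alpha> \<beta> x \<alpha>"
  define vb where "vb = vel \<alpha> \<beta> x \<beta>"
  define pa where "pa = (\<lambda>s. x \<alpha> + (s - \<alpha>) *\<^sub>R va + ((s - \<alpha>)^2 / 2) *\<^sub>R \<zeta> \<alpha>)"
  define pb where "pb = (\<lambda>s. x \<beta> + (s - \<beta>) *\<^sub>R vb + ((s - \<beta>)^2 / 2) *\<^sub>R \<zeta> \<beta>)"
  define p1a where "p1a = (\<lambda>s. va + (s - \<alpha>) *\<^sub>R \<zeta> \<alpha>)"
  define p1b where "p1b = (\<lambda>s. vb + (s - \<beta>) *\<^sub>R \<zeta> \<beta>)"
  define Y where "Y = (\<lambda>s. if s < \<alpha> then pa s else if s > \<beta> then pb s else x s)"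
  define Y1 where "Y1 = (\<lambda>s. if s < \<alpha> then p1a s else if s > \<beta> then p1b s else vel \<alpha> \<beta> x s)"
  define Y2 where "Y2 = (\<lambda>s. if s < \<alpha> then \<zeta> \<alpha> else if s > \<beta> then \<zeta> \<beta> else \<zeta> s)"
  have YI: "s \<in> ?I \<Longrightarrow> Y s = x s" for s by (auto simp: Y_def)
  have Y1I: "s \<in> ?I \<Longrightarrow> Y1 s = vel \<alpha> \<beta> x s" for s by (auto simp: Y1_def)
  have vdY: "vd Y t (Y1 t)" for t
  proof -
    have "vd Y t (if t < \<alpha> then p1a t else if t > \<beta> then p1b t else vel \<alpha> \<beta> x t)"
    proof (rule vd_glue[OF ab])
      fix t assume t: "t \<in> ?I"
      have 1: "((\<lambda>s. (1 / (s - t)) *\<^sub>R (x s - x t)) \<longlongrightarrow> vel \<alpha> \<beta> x t) (at t within ?I)"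
        using ext_vel_tendsto[OF X(3,2,4) t] X(7) t by simp
      have "\<forall>\<^sub>F s in at t within ?I. (1 / (s - t)) *\<^sub>R (x s - x t) = (1 / (s - t)) *\<^sub>R (Y s - Y t)"
        unfolding eventually_at_topological using t by (intro exI[of _ UNIV]) (auto simp: YI)
      from Lim_transform_eventually[OF 1 this]
      show "((\<lambda>s. (1 / (s - t)) *\<^sub>R (Y s - Y t)) \<longlongrightarrow> vel \<alpha> \<beta> x t) (at t within ?I)" .
    next
      fix s :: real assume "s \<le> \<alpha>" then show "Y s = pa s" using ab by (auto simp: Y_def pa_def)
    next
      fix s :: real assume "s \<ge> \<beta>" then show "Y s = pb s" using ab by (auto simp: Y_def pb_def)
    next
      fix t show "vd pa t (p1a t)" unfolding pa_def p1a_def by (rule vd_quad[OF tvsV])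
    next
      fix t show "vd pb t (p1b t)" unfolding pb_def p1b_def by (rule vd_quad[OF tvsV])
    qed (simp_all add: p1a_def p1b_def va_def vb_def)
    then show ?thesis by (simp add: Y1_def)
  qed
  have vdY1: "vd Y1 t (Y2 t)" for t
  proof -
    have "vd Y1 t (if t < \<alpha> then \<zeta> \<alpha> else if t > \<beta> then \<zeta> \<beta> else \<zeta> t)"
    proof (rule vd_glue[OF ab])
      fix t assume t: "t \<in> ?I"
      have "\<forall>\<^sub>F s in at t within ?I. (1 / (s - t)) *\<^sub>R (vel \<alpha> \<beta> x s - vel \<alpha> \<beta> x t) = (1 / (s - t)) *\<^sub>R (Y1 s - Y1 t)"
        unfolding eventually_at_topological using t by (intro exI[of _ UNIV]) (auto simp: Y1I)
      from Lim_transform_eventually[OF w2s[OF t] this]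
      show "((\<lambda>s. (1 / (s - t)) *\<^sub>R (Y1 s - Y1 t)) \<longlongrightarrow> \<zeta> t) (at t within ?I)" .
    next
      fix s :: real assume "s \<le> \<alpha>" then show "Y1 s = p1a s" using ab by (auto simp: Y1_def p1a_def va_def)
    next
      fix s :: real assume "s \<ge> \<beta>" then show "Y1 s = p1b s" using ab by (auto simp: Y1_def p1b_def vb_def)
    next
      fix t show "vd p1a t (\<zeta> \<alpha>)" unfolding p1a_def by (rule vd_lin[OF tvsV])
    next
      fix t show "vd p1b t (\<zeta> \<beta>)" unfolding p1b_def by (rule vd_lin[OF tvsV])
    qed simp_all
    then show ?thesis by (simp add: Y2_def)
  qed
  have cY1: "continuous_on UNIV Y1"
    by (rule continuous_at_imp_continuous_on) (use vd_isCont[OF tvsV vdY1] in blast)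
  have Y2c: "Y2 = (\<lambda>s. \<zeta> (max \<alpha> (min \<beta> s)))"
    using ab by (auto simp: Y2_def fun_eq_iff)
  have cY2: "continuous_on UNIV Y2"
    unfolding Y2c by (rule continuous_on_compose2[OF c\<zeta>]) (use ab in \<open>auto intro!: continuous_intros\<close>)
  have C2Y: "C2 UNIV Y" by (rule curve_C2[OF tvsV vdY vdY1 cY1 cY2])
  have x2: "C2_curve \<Omega> \<alpha> \<beta> x"
    unfolding C2_curve_def using C2Y YI X(8) by (intro conjI exI[of _ UNIV] exI[of _ Y]) auto
  show ?thesis unfolding geodesic_def using x2 geq by blast
qed

end

theorem theorem6p3:
  fixes \<Omega> :: "'v::{real_vector,t2_space} set"
    and g :: "'v \<Rightarrow> 'v \<Rightarrow> 'v \<Rightarrow> real"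
    and A :: "'v \<Rightarrow> 'v \<Rightarrow> 'v \<Rightarrow> 'v"
    and \<alpha> \<beta> :: real
  assumes "lcs TYPE('v)"
    and "open \<Omega>"
    and "\<alpha> < \<beta>"
    and "riem_metric \<Omega> g"
    and "levi_civita \<Omega> g A"
  shows "(\<forall>x. C2_curve \<Omega> \<alpha> \<beta> x \<longrightarrow>
            (energy_critical \<Omega> g \<alpha> \<beta> x \<longleftrightarrow> geodesic \<Omega> A \<alpha> \<beta> x))
       \<and> (\<forall>L :: ('v \<Rightarrow> real) set.
            (\<forall>l\<in>L. linear l \<and> continuous_on UNIV l) \<and>
            \<Inter>{{w. l w = 0} | l. l \<in> L} = {0} \<and>
            (\<forall>l\<in>L. \<forall>v\<in>\<Omega>. \<exists>\<eta>. \<forall>w. l w = g v \<eta> w)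
            \<longrightarrow> (\<forall>x. energy_critical \<Omega> g \<alpha> \<beta> x \<longrightarrow>
                    C2_curve \<Omega> \<alpha> \<beta> x \<and> geodesic \<Omega> A \<alpha> \<beta> x))"
proof -
  interpret rm \<Omega> g A \<alpha> \<beta>
    by (rule rm.intro) (fact assms)+
  show ?thesis
  proof (rule conjI)
    show "\<forall>x. C2_curve \<Omega> \<alpha> \<beta> x \<longrightarrow> (energy_critical \<Omega> g \<alpha> \<beta> x \<longleftrightarrow> geodesic \<Omega> A \<alpha> \<beta> x)"
      using partA by blast
  next
    show "\<forall>L :: ('v \<Rightarrow> real) set.
            (\<forall>l\<in>L. linear l \<and> continuous_on UNIV l) \<and>
            \<Inter>{{w. l w = 0} | l. l \<in> L} = {0} \<and>
            (\<forall>l\<in>L. \<forall>v\<in>\<Omega>. \<exists>\<eta>. \<forall>w. l w = g v \<eta> w)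
            \<longrightarrow> (\<forall>x. energy_critical \<Omega> g \<alpha> \<beta> x \<longrightarrow>
                    C2_curve \<Omega> \<alpha> \<beta> x \<and> geodesic \<Omega> A \<alpha> \<beta> x)"
    proof (intro allI impI)
    fix L :: "('v \<Rightarrow> real) set" and x :: "real \<Rightarrow> 'v"
    assume H: "(\<forall>l\<in>L. linear l \<and> continuous_on UNIV l) \<and>
            \<Inter>{{w. l w = 0} | l. l \<in> L} = {0} \<and>
            (\<forall>l\<in>L. \<forall>v\<in>\<Omega>. \<exists>\<eta>. \<forall>w. l w = g v \<eta> w)"
      and c: "energy_critical \<Omega> g \<alpha> \<beta> x"
    have h1: "\<forall>l\<in>L. linear l \<and> continuous_on UNIV l" using H by (rule conjunct1)
    have h2: "\<Inter>{{w. l w = 0} | l. l \<in> L} = {0}" using H[THEN conjunct2] by (rule conjunct1)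
    have h3: "\<forall>l\<in>L. \<forall>v\<in>\<Omega>. \<exists>\<eta>. \<forall>w. l w = g v \<eta> w" using H[THEN conjunct2] by (rule conjunct2)
    show "C2_curve \<Omega> \<alpha> \<beta> x \<and> geodesic \<Omega> A \<alpha> \<beta> x"
      by (rule partB[OF h1 h2 h3 c])
    qed
  qed
qed

end
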